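(* Let $\tau$ be in the upper half plane, $z\in\mathbb{C}$, $q^{s}=e^{2\pi i s\tau}$, $y^{s}=e^{2\pi i s z}$. Let $S_3$ and $S_4$ denote the holomorphic square roots of $\theta_3(0|\tau)/\eta(\tau)$ and $\theta_4(0|\tau)/\eta(\tau)$ on the upper half plane of the form $q^{-1/48}(1+O(q^{1/2}))$. Define $$A=\tfrac{1}{2\eta}\big(S_3\,\theta_3(z|2\tau)+S_4\,\theta_4(z|2\tau)\big),\quad C=\tfrac{1}{2\eta}\big(S_3\,\theta_3(z|2\tau)-S_4\,\theta_4(z|2\tau)\big),$$ $$B=\tfrac{1}{2\eta}\big(S_3\,\theta_2(z|2\tau)+i\,S_4\,\theta_1(z|2\tau)\big),\quad D=\tfrac{1}{2\eta}\big(S_3\,\theta_2(z|2\tau)-i\,S_4\,\theta_1(z|2\tau)\big),$$ $$E=\frac{\eta(2\tau)}{\eta(\tau)^2}\,q^{1/16}y^{-1/4}\,\theta_3\!\left(z-\tfrac{\tau}{2}\,\big|\,2\tau\right),\quad F=\frac{\eta(2\tau)}{\eta(\tau)^2}\,q^{1/16}y^{1/4}\,\theta_3\!\left(z+\tfrac{\tau}{2}\,\big|\,2\tau\right),$$ where $\eta=\eta(\tau)$, and set $\mathrm{NS}_1=A^4+B^4+C^4+D^4$, $\mathrm{NS}_2=E^4+F^4$, $\mathrm{NS}_3=A^2B^2+B^2C^2+C^2D^2+D^2A^2$, $\mathrm{NS}_4=ABF^2+BCE^2+CDF^2+ADE^2$. Then $$-2\,\mathrm{NS}_1+2\,\mathr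m{NS}_2+6\,\mathrm{NS}_3+12\,\mathrm{NS}_4=-24\,\frac{\theta_1(z|\tau)^2}{\theta_3^2}+2\left(\theta_2^4-\theta_4^4\right)\frac{\theta_3(z|\tau)^2}{\eta(\tau)^6}.$$
   Context: Jacobi theta functions: $\theta_1(z|\tau)=-i\sum_{n\in\mathbb{Z}}(-1)^n q^{(n+1/2)^2/2}y^{n+1/2}$, $\theta_2(z|\tau)=\sum_{n\in\mathbb{Z}} q^{(n+1/2)^2/2}y^{n+1/2}$, $\theta_3(z|\tau)=\sum_{n\in\mathbb{Z}} q^{n^2/2}y^{n}$, $\theta_4(z|\tau)=\sum_{n\in\mathbb{Z}}(-1)^n q^{n^2/2}y^{n}$; $\theta_i$ without argument means $\theta_i(0|\tau)$. $\eta(\tau)=q^{1/24}\prod_{n\ge1}(1-q^n)$. *)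

theory Defs
  imports "HOL-Analysis.Analysis"
begin

text \<open>ep x s = e^(2 pi i s x); so q^s = ep tau s and y^s = ep z s.\<close>
definition ep :: "complex \<Rightarrow> complex \<Rightarrow> complex" where
  "ep x s = exp (2 * of_real pi * \<i> * s * x)"

definition theta1 :: "complex \<Rightarrow> complex \<Rightarrow> complex" where
  "theta1 z \<tau> = - \<i> * infsum (\<lambda>n::int. (-1) powi n * ep \<tau> ((of_int n + 1/2)^2 / 2)
                          * ep z (of_int n + 1/2)) UNIV"

definition theta2 :: "complex \<Rightarrow> complex \<Rightarrow> complex" where
  "theta2 z \<tau> = infsum (\<lambda>n::int. ep \<tau> ((of_int n + 1/2)^2 / 2) * ep z (of_int n + 1/2)) UNIV"

definition theta3 :: "complex \<Rightarrow> complex \<Rightarrow> complex" where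
  "theta3 z \<tau> = infsum (\<lambda>n::int. ep \<tau> ((of_int n)^2 / 2) * ep z (of_int n)) UNIV"

definition theta4 :: "complex \<Rightarrow> complex \<Rightarrow> complex" where
  "theta4 z \<tau> = infsum (\<lambda>n::int. (-1) powi n * ep \<tau> ((of_int n)^2 / 2) * ep z (of_int n)) UNIV"

definition eta :: "complex \<Rightarrow> complex" where
  "eta \<tau> = ep \<tau> (1/24) * prodinf (\<lambda>n::nat. 1 - ep \<tau> (of_nat (Suc n)))"

definition normalized_sqrt :: "(complex \<Rightarrow> complex) \<Rightarrow> (complex \<Rightarrow> complex) \<Rightarrow> bool" where
  "normalized_sqrt f S \<longleftrightarrow>
     S holomorphic_on {\<tau>. Im \<tau> > 0} \<and>
     (\<forall>\<tau>. Im \<tau> > 0 \<longrightarrow> S \<tau> ^ 2 = f \<tau>) \<and>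
     (\<exists>M K. \<forall>\<tau>. Im \<tau> > M \<longrightarrow>
        norm (S \<tau> * ep \<tau> (1/48) - 1) \<le> K * norm (ep \<tau> (1/2)))"

end

theory Submission
  imports Defs
begin

lemma ep_alt: "ep x s = exp (2 * of_real pi * \<i> * (s * x))"
  unfolding ep_def by (simp add: mult.assoc)

lemma ep_mult_s: "ep x s * ep x t = ep x (s + t)"
  unfolding ep_def by (simp add: exp_add[symmetric] algebra_simps)

lemma ep_mult_x: "ep x s * ep y s = ep (x + y) s"
  unfolding ep_def by (simp add: exp_add[symmetric] algebra_simps)

lemma ep_swap: "ep x s = ep s x"
  unfolding ep_def by (simp add: algebra_simps)

lemma ep_cong: "s * x = t * y \<Longrightarrow> ep x s = ep y t"
  unfolding ep_alt by simp

lemma norm_ep: "norm (ep x s) = exp (- 2 * pi * Im (s * x))"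
  unfolding ep_alt norm_exp_eq_Re by simp

lemma ep_int: "ep 1 (of_int n) = 1"
proof -
  have "ep 1 (of_int n) = exp (of_int n * (2 * of_real pi * \<i>))"
    unfolding ep_def by (simp add: algebra_simps)
  also have "\<dots> = 1" using exp_integer_2pi[of "of_int n"] by (simp add: algebra_simps)
  finally show ?thesis .
qed

lemma ep_zero_x[simp]: "ep 0 s = 1" and ep_zero_s[simp]: "ep x 0 = 1"
  unfolding ep_def by simp_all

lemma ep_nonzero[simp]: "ep x s \<noteq> 0"
  unfolding ep_def by simp

lemma gauss_bound:
  fixes \<alpha> \<beta> x :: real
  assumes "\<alpha> > 0"
  shows "- \<alpha> * x\<^sup>2 + \<beta> * x \<le> (\<bar>\<beta>\<bar> + 1)\<^sup>2 / (4 * \<alpha>) - \<bar>x\<bar>"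
proof -
  define b where "b = \<bar>\<beta>\<bar> + 1"
  have sq: "0 \<le> \<alpha> * (\<bar>x\<bar> - b / (2 * \<alpha>))\<^sup>2" using assms by simp
  have e: "\<alpha> * (\<bar>x\<bar> - b / (2 * \<alpha>))\<^sup>2 = \<alpha> * x\<^sup>2 - b * \<bar>x\<bar> + b\<^sup>2 / (4 * \<alpha>)"
    using assms by (simp add: power2_eq_square field_simps)
  have "\<beta> * x \<le> \<bar>\<beta>\<bar> * \<bar>x\<bar>"
    by (metis abs_ge_self abs_mult)
  then show ?thesis using sq e unfolding b_def by (simp add: algebra_simps)
qed

lemma int_summable_exp_abs:
  "(\<lambda>n::int. exp (- \<bar>real_of_int n\<bar>)) summable_on UNIV"
proof -
  have g: "summable (\<lambda>n::nat. exp (- real n))"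
  proof -
    have "summable (\<lambda>n::nat. exp (-1::real) ^ n)" by (rule summable_geometric) simp
    then show ?thesis by (simp add: exp_of_nat_mult[symmetric])
  qed
  have A: "(\<lambda>n::int. exp (- \<bar>real_of_int n\<bar>)) summable_on range int"
  proof -
    have "((\<lambda>n::int. exp (- \<bar>real_of_int n\<bar>)) \<circ> int) summable_on UNIV"
      using summable_nonneg_imp_summable_on[OF g] by (simp add: o_def)
    then show ?thesis by (subst summable_on_reindex) (auto simp: inj_on_def)
  qed
  have B: "(\<lambda>n::int. exp (- \<bar>real_of_int n\<bar>)) summable_on range (\<lambda>n. - int (Suc n))"
  proof -
    have g2: "summable (\<lambda>n::nat. exp (- real (Suc n)))"
      using g summable_Suc_iff[of "\<lambda>n. exp (- real n)"] by simp
    have "((\<lambda>n::int. exp (- \<bar>real_of_int n\<bar>)) \<circ> (\<lambda>n. - int (Suc n))) summable_on UNIV"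
      using summable_nonneg_imp_summable_on[OF g2] by (simp add: o_def algebra_simps)
    then show ?thesis by (subst summable_on_reindex) (auto simp: inj_on_def)
  qed
  have U: "(UNIV::int set) = range int \<union> range (\<lambda>n. - int (Suc n))"
  proof -
    have "x \<in> range int \<union> range (\<lambda>n. - int (Suc n))" for x :: int
    proof (cases "x \<ge> 0")
      case True then show ?thesis by (auto intro: image_eqI[of _ _ "nat x"])
    next
      case False then show ?thesis by (auto intro!: image_eqI[of _ _ "nat (- x - 1)"])
    qed
    then show ?thesis by auto
  qed
  have D: "range int \<inter> range (\<lambda>n. - int (Suc n)) = {}" by auto
  show ?thesis using summable_on_Un_disjoint[OF A B D] U by simp
qed

lemma int_summable_bound:
  fixes f :: "int \<Rightarrow> complex"
  assumes "\<And>n. norm (f n) \<le> C * exp (- \<bar>real_of_int n\<bar>)"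
  shows "f summable_on UNIV"
proof -
  have "(\<lambda>n::int. C * exp (- \<bar>real_of_int n\<bar>)) summable_on UNIV"
    using int_summable_exp_abs by (rule summable_on_cmult_right)
  then have "(\<lambda>n. norm (f n)) summable_on UNIV"
    by (rule summable_on_comparison_test) (use assms in auto)
  then show ?thesis using summable_on_iff_abs_summable_on_complex by blast
qed

lemma has_sum_product_complex:
  fixes f :: "'a \<Rightarrow> complex" and g :: "'b \<Rightarrow> complex"
  assumes f: "f summable_on UNIV" and g: "g summable_on UNIV"
  shows "((\<lambda>(m,n). f m * g n) has_sum (infsum f UNIV * infsum g UNIV)) UNIV"
proof -
  have fa: "(\<lambda>x. norm (f x)) summable_on UNIV" using f summable_on_iff_abs_summable_on_complex by blast
  have ga: "(\<lambda>x. norm (g x)) summable_on UNIV" using g summable_on_iff_abs_summable_on_complex by blast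
  have "(\<lambda>p. norm ((\<lambda>(m,n). f m * g n) p)) summable_on Sigma UNIV (\<lambda>_. UNIV)"
  proof (subst Infinite_Sum.abs_summable_on_Sigma_iff, intro conjI ballI)
    fix x :: 'a
    show "(\<lambda>y. norm ((\<lambda>(m, n). f m * g n) (x, y))) summable_on UNIV"
      using summable_on_cmult_right[OF ga, of "norm (f x)"] by (simp add: norm_mult)
  next
    have "(\<lambda>x. norm (f x) * infsum (\<lambda>y. norm (g y)) UNIV) summable_on UNIV"
      using summable_on_cmult_left[OF fa] by simp
    then show "(\<lambda>x. norm (infsum (\<lambda>y. norm ((\<lambda>(m, n). f m * g n) (x, y))) UNIV)) summable_on UNIV"
      by (simp add: norm_mult infsum_cmult_right' infsum_nonneg)
  qed
  then have S: "(\<lambda>(m,n). f m * g n) summable_on Sigma UNIV (\<lambda>_. UNIV)"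
    using summable_on_iff_abs_summable_on_complex by blast
  have "((\<lambda>(m,n). f m * g n) has_sum (infsum f UNIV * infsum g UNIV)) (Sigma UNIV (\<lambda>_. UNIV))"
  proof (rule has_sum_SigmaI[OF _ _ S])
    fix x :: 'a
    show "((\<lambda>y. (\<lambda>(m,n). f m * g n) (x, y)) has_sum (f x * infsum g UNIV)) UNIV"
      using has_sum_cmult_right[OF has_sum_infsum[OF g], of "f x"] by simp
  next
    show "((\<lambda>x. f x * infsum g UNIV) has_sum (infsum f UNIV * infsum g UNIV)) UNIV"
      using has_sum_cmult_left[OF has_sum_infsum[OF f]] by simp
  qed
  then show ?thesis by simp
qed

definition gt :: "complex \<Rightarrow> complex \<Rightarrow> real \<Rightarrow> int \<Rightarrow> complex" where
  "gt \<zeta> \<tau> a n = ep \<tau> ((of_int n + of_real a)^2/2) * ep \<zeta> (of_int n + of_real a)"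

definition G :: "complex \<Rightarrow> complex \<Rightarrow> real \<Rightarrow> complex" where
  "G \<zeta> \<tau> a = infsum (gt \<zeta> \<tau> a) UNIV"

lemma norm_gt: "norm (gt \<zeta> \<tau> a n) = exp (- pi * Im \<tau> * (real_of_int n + a)\<^sup>2 - 2 * pi * Im \<zeta> * (real_of_int n + a))"
proof -
  have e1: "Im (((of_int n + of_real a)^2/2) * \<tau>) = (real_of_int n + a)\<^sup>2 / 2 * Im \<tau>"
  proof -
    have "((of_int n + of_real a)^2/2 :: complex) = of_real ((real_of_int n + a)\<^sup>2 / 2)" by simp
    then show ?thesis by simp
  qed
  have e2: "Im ((of_int n + of_real a) * \<zeta>) = (real_of_int n + a) * Im \<zeta>"
  proof -
    have "((of_int n + of_real a) :: complex) = of_real (real_of_int n + a)" by simp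
    then show ?thesis by simp
  qed
  show ?thesis unfolding gt_def norm_mult norm_ep e1 e2 exp_add[symmetric]
    by (simp add: algebra_simps)
qed

lemma gt_summable:
  assumes "Im \<tau> > 0"
  shows "gt \<zeta> \<tau> a summable_on UNIV"
proof (rule int_summable_bound)
  fix n :: int
  define K where "K = (\<bar>- 2 * pi * Im \<zeta>\<bar> + 1)\<^sup>2 / (4 * (pi * Im \<tau>))"
  have "- (pi * Im \<tau>) * (real_of_int n + a)\<^sup>2 + (- 2 * pi * Im \<zeta>) * (real_of_int n + a)
        \<le> K - \<bar>real_of_int n + a\<bar>"
    unfolding K_def by (rule gauss_bound) (use assms in simp)
  also have "\<dots> \<le> K + \<bar>a\<bar> - \<bar>real_of_int n\<bar>" by linarith
  finally have "norm (gt \<zeta> \<tau> a n) \<le> exp (K + \<bar>a\<bar> - \<bar>real_of_int n\<bar>)"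
    unfolding norm_gt by (simp add: algebra_simps)
  also have "\<dots> = exp (K + \<bar>a\<bar>) * exp (- \<bar>real_of_int n\<bar>)"
    by (simp add: exp_add[symmetric])
  finally show "norm (gt \<zeta> \<tau> a n) \<le> exp (K + \<bar>a\<bar>) * exp (- \<bar>real_of_int n\<bar>)" .
qed

lemma gt_has_sum: "Im \<tau> > 0 \<Longrightarrow> (gt \<zeta> \<tau> a has_sum G \<zeta> \<tau> a) UNIV"
  unfolding G_def using gt_summable by (rule has_sum_infsum)

lemma gt_mult_term:
  "gt x \<tau> a (k + l + e) * gt y \<tau> b (k - l) =
   gt (x + y) (2 * \<tau>) ((a + b + of_int e) / 2) k * gt (x - y) (2 * \<tau>) ((a - b + of_int e) / 2) l"
  unfolding gt_def ep_def mult_exp_exp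
  apply (rule arg_cong[where f=exp])
  apply (simp add: field_simps power2_eq_square)
  done

lemma G_mult:
  assumes "Im \<tau> > 0"
  shows "G x \<tau> a * G y \<tau> b =
    G (x + y) (2 * \<tau>) ((a + b) / 2) * G (x - y) (2 * \<tau>) ((a - b) / 2) +
    G (x + y) (2 * \<tau>) ((a + b + 1) / 2) * G (x - y) (2 * \<tau>) ((a - b + 1) / 2)"
proof -
  have t2: "Im (2 * \<tau>) > 0" using assms by simp
  define F where "F = (\<lambda>(m::int, n::int). gt x \<tau> a m * gt y \<tau> b n)"
  have H: "(F has_sum (G x \<tau> a * G y \<tau> b)) UNIV"
    unfolding F_def G_def using has_sum_product_complex[OF gt_summable[OF assms] gt_summable[OF assms]]
    by simp
  define \<phi> where "\<phi> = (\<lambda>(e::int) (k::int, l::int). (k + l + e, k - l))"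
  have inj: "inj (\<phi> e)" for e
    unfolding \<phi>_def inj_def by auto
  have part: "(F has_sum (G (x + y) (2 * \<tau>) ((a + b + of_int e) / 2) * G (x - y) (2 * \<tau>) ((a - b + of_int e) / 2)))
              (range (\<phi> e))" for e
  proof -
    have "((\<lambda>(k,l). gt (x + y) (2 * \<tau>) ((a + b + of_int e) / 2) k * gt (x - y) (2 * \<tau>) ((a - b + of_int e) / 2) l)
           has_sum (G (x + y) (2 * \<tau>) ((a + b + of_int e) / 2) * G (x - y) (2 * \<tau>) ((a - b + of_int e) / 2))) UNIV"
      unfolding G_def using has_sum_product_complex[OF gt_summable[OF t2] gt_summable[OF t2]] by simp
    moreover have "(F \<circ> \<phi> e) = (\<lambda>(k,l). gt (x + y) (2 * \<tau>) ((a + b + of_int e) / 2) k * gt (x - y) (2 * \<tau>) ((a - b + of_int e) / 2) l)"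
      unfolding F_def \<phi>_def by (auto simp: gt_mult_term)
    ultimately show ?thesis by (simp add: has_sum_reindex[OF inj])
  qed
  have U: "range (\<phi> 0) \<union> range (\<phi> 1) = UNIV"
  proof -
    have "p \<in> range (\<phi> 0) \<union> range (\<phi> 1)" for p
    proof (cases p)
      case (Pair m n)
      show ?thesis
      proof (cases "even (m + n)")
        case True
        from True obtain k where k: "m + n = 2 * k" by (rule evenE)
        have "p = \<phi> 0 (k, m - k)" unfolding \<phi>_def Pair using k by auto
        then show ?thesis by auto
      next
        case False
        from False obtain k where k: "m + n = 2 * k + 1" by (rule oddE)
        have "p = \<phi> 1 (k, m - k - 1)" unfolding \<phi>_def Pair using k by auto
        then show ?thesis by auto
      qed
    qed
    then show ?thesis by auto
  qed
  have D: "range (\<phi> 0) \<inter> range (\<phi> 1) = {}"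
  proof -
    have "\<phi> 0 p \<noteq> \<phi> 1 q" for p q
    proof
      assume "\<phi> 0 p = \<phi> 1 q"
      then show False
        unfolding \<phi>_def by (cases p; cases q) (auto, presburger)
    qed
    then show ?thesis by blast
  qed
  have "(F has_sum (G (x + y) (2 * \<tau>) ((a + b + of_int 0) / 2) * G (x - y) (2 * \<tau>) ((a - b + of_int 0) / 2) +
                   G (x + y) (2 * \<tau>) ((a + b + of_int 1) / 2) * G (x - y) (2 * \<tau>) ((a - b + of_int 1) / 2))) UNIV"
    using has_sum_Un_disjoint[OF part[of 0] part[of 1] D] U by simp
  with H show ?thesis using has_sum_unique by fastforce
qed

lemma ep_half_int: "ep (1/2) (of_int n) = (-1) powi n"
proof -
  have "ep (1/2) (of_int n) = exp (of_int n * (of_real pi * \<i>))"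
    unfolding ep_def by (simp add: algebra_simps)
  also have "\<dots> = exp (of_real pi * \<i>) powi n" by (rule exp_power_int[symmetric])
  also have "exp (of_real pi * \<i>) = -1" by (simp add: exp_pi_i')
  finally show ?thesis .
qed

lemma ep_half_half: "ep (1/2) (1/2) = \<i>"
proof -
  have "ep (1/2) (1/2) = exp (\<i> * of_real (pi/2))" unfolding ep_def by (simp add: algebra_simps)
  also have "\<dots> = \<i>" by (simp only: exp_Euler cos_of_real sin_of_real) simp
  finally show ?thesis .
qed

lemma ep_one_real: "ep 1 (of_int n + s) = ep 1 s"
  using ep_mult_s[of 1 "of_int n" s] ep_int by simp

lemma G_shift_a: "G \<zeta> \<tau> (a + 1) = G \<zeta> \<tau> a"
proof -
  have e: "gt \<zeta> \<tau> a (n + 1) = gt \<zeta> \<tau> (a + 1) n" for n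
    unfolding gt_def by (simp add: add_ac)
  show ?thesis unfolding G_def
    by (rule infsum_reindex_bij_witness[of UNIV "\<lambda>n. n - 1" "\<lambda>n. n + 1"]) (simp_all add: e)
qed

lemma G_shift_a': "G \<zeta> \<tau> (a - 1) = G \<zeta> \<tau> a"
  using G_shift_a[of \<zeta> \<tau> "a - 1"] by simp

lemma G_zeta_shift: "G (\<zeta> + 1) \<tau> a = ep 1 (of_real a) * G \<zeta> \<tau> a"
proof -
  have "gt (\<zeta> + 1) \<tau> a n = ep 1 (of_real a) * gt \<zeta> \<tau> a n" for n
  proof -
    have "ep (\<zeta> + 1) (of_int n + of_real a) = ep \<zeta> (of_int n + of_real a) * ep 1 (of_real a)"
      using ep_mult_x[of \<zeta> "of_int n + of_real a" 1] ep_one_real[of n "of_real a"] by simp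
    then show ?thesis unfolding gt_def by simp
  qed
  then have "gt (\<zeta> + 1) \<tau> a = (\<lambda>n. ep 1 (of_real a) * gt \<zeta> \<tau> a n)" by (rule ext)
  then show ?thesis unfolding G_def by (simp add: infsum_cmult_right')
qed

lemma G_split:
  assumes "Im \<tau> > 0"
  shows "G \<zeta> \<tau> a = G (2 * \<zeta>) (4 * \<tau>) (a / 2) + G (2 * \<zeta>) (4 * \<tau>) ((a + 1) / 2)"
proof -
  have t4: "Im (4 * \<tau>) > 0" using assms by simp
  have e0: "gt \<zeta> \<tau> a ((\<lambda>k. 2 * k) k) = gt (2 * \<zeta>) (4 * \<tau>) (a / 2) k" for k
    unfolding gt_def ep_def mult_exp_exp
    by (rule arg_cong[where f=exp]) (simp add: field_simps power2_eq_square)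
  have e1: "gt \<zeta> \<tau> a ((\<lambda>k. 2 * k + 1) k) = gt (2 * \<zeta>) (4 * \<tau>) ((a + 1) / 2) k" for k
    unfolding gt_def ep_def mult_exp_exp
    by (rule arg_cong[where f=exp]) (simp add: field_simps power2_eq_square)
  have i0: "inj (\<lambda>k::int. 2 * k)" by (auto simp: inj_def)
  have i1: "inj (\<lambda>k::int. 2 * k + 1)" by (auto simp: inj_def)
  have h0: "(gt \<zeta> \<tau> a has_sum G (2 * \<zeta>) (4 * \<tau>) (a / 2)) (range (\<lambda>k::int. 2 * k))"
    by (subst has_sum_reindex[OF i0]) (simp add: o_def e0 gt_has_sum[OF t4])
  have h1: "(gt \<zeta> \<tau> a has_sum G (2 * \<zeta>) (4 * \<tau>) ((a + 1) / 2)) (range (\<lambda>k::int. 2 * k + 1))"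
    by (subst has_sum_reindex[OF i1]) (simp add: o_def e1 gt_has_sum[OF t4])
  have D: "range (\<lambda>k::int. 2 * k) \<inter> range (\<lambda>k::int. 2 * k + 1) = {}" by auto presburger
  have U: "range (\<lambda>k::int. 2 * k) \<union> range (\<lambda>k::int. 2 * k + 1) = UNIV"
  proof -
    have "n \<in> range (\<lambda>k::int. 2 * k) \<union> range (\<lambda>k::int. 2 * k + 1)" for n :: int
    proof (cases "even n")
      case True then obtain k where "n = 2 * k" by (rule evenE)
      then show ?thesis by auto
    next
      case False then obtain k where "n = 2 * k + 1" by (rule oddE)
      then show ?thesis by auto
    qed
    then show ?thesis by auto
  qed
  have "(gt \<zeta> \<tau> a has_sum (G (2 * \<zeta>) (4 * \<tau>) (a / 2) + G (2 * \<zeta>) (4 * \<tau>) ((a + 1) / 2))) UNIV"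
    using has_sum_Un_disjoint[OF h0 h1 D] U by simp
  then show ?thesis using gt_has_sum[OF assms] has_sum_unique by blast
qed

lemma G_half_half: "G (1/2) \<tau> (1/2) = 0"
proof -
  have neg: "gt (1/2) \<tau> (1/2) (- n - 1) = - gt (1/2) \<tau> (1/2) n" for n
  proof -
    have a: "ep \<tau> ((of_int (- n - 1) + of_real (1/2))\<^sup>2 / 2) = ep \<tau> ((of_int n + of_real (1/2))\<^sup>2 / 2)"
      by (rule ep_cong) (simp add: field_simps power2_eq_square)
    have b: "ep (1/2) (of_int (- n - 1) + of_real (1/2)) = - ep (1/2) (of_int n + of_real (1/2))"
    proof -
      have "ep (1/2) (of_int (- n - 1) + of_real (1/2)) = ep (1/2) (of_int (-n)) * ep (1/2) (-1/2)"
        unfolding ep_mult_s by (rule ep_cong) (simp add: field_simps)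
      also have "ep (1/2) (-1/2) = - \<i>"
      proof -
        have "ep (1/2) (-1/2) = exp (\<i> * of_real (- pi/2))" unfolding ep_def by (simp add: algebra_simps)
        also have "\<dots> = - \<i>" by (simp only: exp_Euler cos_of_real sin_of_real) simp
        finally show ?thesis .
      qed
      also have "ep (1/2) (of_int n + of_real (1/2)) = ep (1/2) (of_int n) * \<i>"
        using ep_mult_s[of "1/2" "of_int n" "1/2"] ep_half_half by simp
      moreover have "ep (1/2) (of_int (-n)) = ep (1/2) (of_int n)"
        unfolding ep_half_int by (simp add: power_int_minus power_int_inverse[symmetric])
      ultimately show ?thesis by simp
    qed
    show ?thesis unfolding gt_def a b by simp
  qed
  have "G (1/2) \<tau> (1/2) = infsum (\<lambda>n. gt (1/2) \<tau> (1/2) (- n - 1)) UNIV"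
    unfolding G_def
    by (rule infsum_reindex_bij_witness[of UNIV "\<lambda>n. - n - 1" "\<lambda>n. - n - 1"]) auto
  also have "\<dots> = - G (1/2) \<tau> (1/2)" unfolding neg G_def by (simp add: infsum_uminus)
  finally show ?thesis by simp
qed

lemma theta3_G: "theta3 z \<tau> = G z \<tau> 0"
  unfolding theta3_def G_def gt_def by simp

lemma theta2_G: "theta2 z \<tau> = G z \<tau> (1/2)"
  unfolding theta2_def G_def gt_def by simp

lemma theta4_G: "theta4 z \<tau> = G (z + 1/2) \<tau> 0"
proof -
  have "(-1) powi n * ep \<tau> ((of_int n)\<^sup>2 / 2) * ep z (of_int n) = gt (z + 1/2) \<tau> 0 n" for n
    unfolding gt_def ep_mult_x[symmetric] ep_half_int[symmetric] by simp
  then show ?thesis unfolding theta4_def G_def by simp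
qed

lemma theta1_G: "theta1 z \<tau> = - G (z + 1/2) \<tau> (1/2)"
proof -
  have e: "ep (1/2) (of_int n + 1/2) = (-1) powi n * \<i>" for n
    using ep_mult_s[of "1/2" "of_int n" "1/2"] ep_half_int ep_half_half by simp
  have "\<i> * ((-1) powi n * ep \<tau> ((of_int n + 1/2)\<^sup>2 / 2) * ep z (of_int n + 1/2)) = gt (z + 1/2) \<tau> (1/2) n" for n
    unfolding gt_def ep_mult_x[symmetric] by (simp add: e)
  then have "(-1) powi n * ep \<tau> ((of_int n + 1/2)\<^sup>2 / 2) * ep z (of_int n + 1/2) = (- \<i>) * gt (z + 1/2) \<tau> (1/2) n" for n
    by (metis (no_types, lifting) complex_i_not_zero i_squared minus_mult_minus mult.assoc
          mult.left_commute mult_minus1 nonzero_mult_div_cancel_left)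
  then have "theta1 z \<tau> = - \<i> * infsum (\<lambda>n. (- \<i>) * gt (z + 1/2) \<tau> (1/2) n) UNIV"
    unfolding theta1_def by simp
  also have "infsum (\<lambda>n. (- \<i>) * gt (z + 1/2) \<tau> (1/2) n) UNIV = (- \<i>) * G (z + 1/2) \<tau> (1/2)"
    unfolding G_def by (rule infsum_cmult_right')
  finally show ?thesis by simp
qed

lemma theta3_shift_G_aux:
  fixes c :: real
  assumes "c = 1 \<or> c = -1"
  shows "ep \<tau> (1/16) * ep z (of_real c / 4) * theta3 (z + of_real c * \<tau> / 2) (2 * \<tau>) = G z (2 * \<tau>) (c / 4)"
proof -
  define C where "C = ep \<tau> (1/16) * ep z (of_real c / 4)"
  have tm: "gt z (2 * \<tau>) (c / 4) n = C * (ep (2 * \<tau>) ((of_int n)\<^sup>2 / 2) * ep (z + of_real c * \<tau> / 2) (of_int n))" for n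
  proof -
    have c2: "c^2 = 1" using assms by auto
    have c2': "(of_real c :: complex) * of_real c = 1" using c2 by (metis of_real_eq_1_iff of_real_mult power2_eq_square)
    show ?thesis unfolding C_def gt_def ep_def mult_exp_exp
      by (rule arg_cong[where f=exp]) (simp add: field_simps power2_eq_square c2')
  qed
  have "G z (2 * \<tau>) (c / 4) = infsum (\<lambda>n. C * (ep (2 * \<tau>) ((of_int n)\<^sup>2 / 2) * ep (z + of_real c * \<tau> / 2) (of_int n))) UNIV"
    unfolding G_def by (rule infsum_cong) (rule tm)
  also have "\<dots> = C * theta3 (z + of_real c * \<tau> / 2) (2 * \<tau>)"
    unfolding theta3_def by (rule infsum_cmult_right')
  finally show ?thesis unfolding C_def by simp
qed

lemma F_G: "ep \<tau> (1/16) * ep z (1/4) * theta3 (z + \<tau> / 2) (2 * \<tau>) = G z (2 * \<tau>) (1/4)"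
  using theta3_shift_G_aux[of 1 \<tau> z] by simp

lemma E_G: "ep \<tau> (1/16) * ep z (-1/4) * theta3 (z - \<tau> / 2) (2 * \<tau>) = G z (2 * \<tau>) (-1/4)"
  using theta3_shift_G_aux[of "-1" \<tau> z] by simp

lemma final_algebra:
  fixes j SA SB aA aB aC aD e f \<kappa> \<eta> tB tC tD TA TB TC TD :: complex
  assumes eta0: "\<eta> \<noteq> 0"
    and SA: "SA^2 * \<eta> = tC" and SB: "SB^2 * \<eta> = tD"
    and R1: "aA^2 + aB^2 = TC * tC" and R2: "aA^2 - aB^2 = TD * tD"
    and R3: "aC^2 + aD^2 = TD * tC" and R4: "aC^2 - aD^2 = TC * tD"
    and R5: "2 * aA * aB = tB * TB" and R6: "2 * aC * aD = - tB * TA"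
    and EF1: "f^2 + e^2 = TB * tC" and EF2: "f^2 - e^2 = j * TA * tD"
    and K: "\<kappa>^2 * (tC * tD) = 1" and J: "2 * \<eta>^3 = tB * tC * tD"
    and Jac: "tC^4 = tB^4 + tD^4" and jj: "j * j = -1"
  shows "let
      A = (SA * aA + SB * aC) / (2 * \<eta>);
      C = (SA * aA - SB * aC) / (2 * \<eta>);
      B = (SA * aB + j * SB * (- aD)) / (2 * \<eta>);
      D = (SA * aB - j * SB * (- aD)) / (2 * \<eta>);
      E = \<kappa> * e;
      F = \<kappa> * f;
      NS1 = A^4 + B^4 + C^4 + D^4;
      NS2 = E^4 + F^4;
      NS3 = A^2*B^2 + B^2*C^2 + C^2*D^2 + D^2*A^2;
      NS4 = A*B*F^2 + B*C*E^2 + C*D*F^2 + A*D*E^2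
    in -2*NS1 + 2*NS2 + 6*NS3 + 12*NS4
       = -24 * TA ^ 2 / tC ^ 2 + 2 * (tB ^ 4 - tD ^ 4) * TC ^ 2 / \<eta> ^ 6"
proof -
  have tC: "tC \<noteq> 0" and tD: "tD \<noteq> 0" using K by auto
  have tB: "tB \<noteq> 0" using J eta0 by auto
  define A where "A = (SA * aA + SB * aC) / (2 * \<eta>)"
  define C where "C = (SA * aA - SB * aC) / (2 * \<eta>)"
  define B where "B = (SA * aB + j * SB * (- aD)) / (2 * \<eta>)"
  define D where "D = (SA * aB - j * SB * (- aD)) / (2 * \<eta>)"
  define X where "X = tC * aA^2 + tD * aC^2"
  define Y where "Y = tC * aB^2 - tD * aD^2"
  define Z where "Z = aA^2 * aC^2 - aD^2 * aB^2"
  have AC1: "A^2 + C^2 = X / (2 * \<eta>^3)"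
    unfolding A_def C_def X_def SA[symmetric] SB[symmetric] using eta0
    by (simp add: field_simps; algebra)
  have BD1: "B^2 + D^2 = Y / (2 * \<eta>^3)"
    unfolding B_def D_def Y_def SA[symmetric] SB[symmetric] using eta0
    by (simp add: field_simps; (algebra | (use jj in algebra)))
  have AC2: "(A^2 - C^2)^2 = tC * tD * aA^2 * aC^2 / \<eta>^6"
    unfolding A_def C_def SA[symmetric] SB[symmetric] using eta0
    by (simp add: field_simps; algebra)
  have BD2: "(B^2 - D^2)^2 = - tC * tD * aD^2 * aB^2 / \<eta>^6"
    unfolding B_def D_def SA[symmetric] SB[symmetric] using eta0
    by (simp add: field_simps; (algebra | (use jj in algebra)))
  have NS1: "A^4 + B^4 + C^4 + D^4 = ((A^2 + C^2)^2 + (A^2 - C^2)^2 + (B^2 + D^2)^2 + (B^2 - D^2)^2) / 2"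
    by (simp add: field_simps; algebra)
  have NS3: "A^2*B^2 + B^2*C^2 + C^2*D^2 + D^2*A^2 = (A^2 + C^2) * (B^2 + D^2)"
    by algebra
  have ABCD1: "A * B + C * D = (tC * aA * aB - j * tD * aC * aD) / (2 * \<eta>^3)"
    unfolding A_def B_def C_def D_def SA[symmetric] SB[symmetric] using eta0
    by (simp add: field_simps; (algebra | (use jj in algebra)))
  have ABCD2: "B * C + A * D = (tC * aA * aB + j * tD * aC * aD) / (2 * \<eta>^3)"
    unfolding A_def B_def C_def D_def SA[symmetric] SB[symmetric] using eta0
    by (simp add: field_simps; (algebra | (use jj in algebra)))
  have NS4: "A*B*(\<kappa>*f)^2 + B*C*(\<kappa>*e)^2 + C*D*(\<kappa>*f)^2 + A*D*(\<kappa>*e)^2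
      = \<kappa>^2 * ((f^2 + e^2) * tC * (aA * aB) - j * (f^2 - e^2) * tD * (aC * aD)) / (2 * \<eta>^3)"
  proof -
    have "A*B*(\<kappa>*f)^2 + B*C*(\<kappa>*e)^2 + C*D*(\<kappa>*f)^2 + A*D*(\<kappa>*e)^2
        = \<kappa>^2 * (f^2 * (A * B + C * D) + e^2 * (B * C + A * D))" by algebra
    also have "\<dots> = \<kappa>^2 * ((f^2 + e^2) * tC * (aA * aB) - j * (f^2 - e^2) * tD * (aC * aD)) / (2 * \<eta>^3)"
      unfolding ABCD1 ABCD2 using eta0 by (simp add: field_simps; (algebra | (use jj in algebra)))
    finally show ?thesis .
  qed
  have NS4': "\<kappa>^2 * ((f^2 + e^2) * tC * (aA * aB) - j * (f^2 - e^2) * tD * (aC * aD)) / (2 * \<eta>^3)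
      = \<kappa>^2 * tB * (tC^2 * TB^2 - tD^2 * TA^2) / (4 * \<eta>^3)"
  proof -
    have a32: "aA * aB = tB * TB / 2" using R5 by (simp add: field_simps)
    have a41: "aC * aD = - tB * TA / 2" using R6 by (simp add: field_simps)
    show ?thesis unfolding a32 a41 EF1 EF2 using eta0 by (simp add: field_simps; (algebra | (use jj in algebra)))
  qed
  have NS2: "(\<kappa>*e)^4 + (\<kappa>*f)^4 = \<kappa>^4 * (TB^2 * tC^2 - TA^2 * tD^2) / 2"
  proof -
    have "(\<kappa>*e)^4 + (\<kappa>*f)^4 = \<kappa>^4 * ((f^2 + e^2)^2 + (f^2 - e^2)^2) / 2"
      by (simp add: field_simps; (algebra | (use jj in algebra)))
    moreover have "(j * TA * tD)^2 = - (TA^2 * tD^2)" using jj by algebra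
    ultimately show ?thesis unfolding EF1 EF2 by (simp add: power_mult_distrib)
  qed
  have a3s: "aA^2 = (TC * tC + TD * tD) / 2" using R1 R2 by (simp add: field_simps; algebra)
  have a2s: "aB^2 = (TC * tC - TD * tD) / 2" using R1 R2 by (simp add: field_simps; algebra)
  have a4s: "aC^2 = (TD * tC + TC * tD) / 2" using R3 R4 by (simp add: field_simps; algebra)
  have a1s: "aD^2 = (TD * tC - TC * tD) / 2" using R3 R4 by (simp add: field_simps; algebra)
  have T2s: "tB^2 * TB^2 = tC^2 * TC^2 - tD^2 * TD^2"
  proof -
    have "tB^2 * TB^2 = 4 * aA^2 * aB^2" using R5 by algebra
    then show ?thesis unfolding a3s a2s by (simp add: field_simps; algebra)
  qed
  have T1s: "tB^2 * TA^2 = tC^2 * TD^2 - tD^2 * TC^2"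
  proof -
    have "tB^2 * TA^2 = 4 * aC^2 * aD^2" using R6 by algebra
    then show ?thesis unfolding a4s a1s by (simp add: field_simps; algebra)
  qed
  have e6: "\<eta>^6 = tB^2 * tC^2 * tD^2 / 4"
  proof -
    have "(2 * \<eta>^3)^2 = (tB * tC * tD)^2" using J by simp
    then show ?thesis by (simp add: field_simps; algebra)
  qed
  have P1: "-2 * (A^4 + B^4 + C^4 + D^4) + 6 * (A^2*B^2 + B^2*C^2 + C^2*D^2 + D^2*A^2)
      = ((tC^4 + tD^4) * TC^2 - 10 * tC^2 * tD^2 * TD^2) / (tB^2 * tC^2 * tD^2)"
  proof -
    have "-2 * (A^4 + B^4 + C^4 + D^4) + 6 * (A^2*B^2 + B^2*C^2 + C^2*D^2 + D^2*A^2)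
       = (- (X^2 + Y^2) / 4 - tC * tD * Z + 3 * X * Y / 2) / \<eta>^6"
      unfolding NS1 NS3 AC1 AC2 BD1 BD2 Z_def using eta0 by (simp add: field_simps; algebra)
    also have "\<dots> = ((tC^4 + tD^4) * TC^2 - 10 * tC^2 * tD^2 * TD^2) / (tB^2 * tC^2 * tD^2)"
      unfolding e6 X_def Y_def Z_def a3s a2s a4s a1s using tB tC tD
      by (simp add: field_simps; algebra)
    finally show ?thesis .
  qed
  have k4: "\<kappa>^4 = 1 / (tC^2 * tD^2)"
  proof -
    have "(\<kappa>^2 * (tC * tD))^2 = 1" using K by simp
    then show ?thesis using tC tD by (simp add: field_simps; algebra)
  qed
  have k2: "\<kappa>^2 = 1 / (tC * tD)" using K tC tD by (simp add: field_simps)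
  have e3: "\<eta>^3 = tB * tC * tD / 2" using J by (simp add: field_simps)
  have P2: "2 * ((\<kappa>*e)^4 + (\<kappa>*f)^4) + 12 * (A*B*(\<kappa>*f)^2 + B*C*(\<kappa>*e)^2 + C*D*(\<kappa>*f)^2 + A*D*(\<kappa>*e)^2)
      = 7 * ((tC^4 + tD^4) * TC^2 - 2 * tC^2 * tD^2 * TD^2) / (tB^2 * tC^2 * tD^2)"
  proof -
    have W: "tC^2 * TB^2 - tD^2 * TA^2 = ((tC^4 + tD^4) * TC^2 - 2 * tC^2 * tD^2 * TD^2) / tB^2"
    proof -
      have "tB^2 * (tC^2 * TB^2 - tD^2 * TA^2) = tC^2 * (tB^2 * TB^2) - tD^2 * (tB^2 * TA^2)" by algebra
      also have "\<dots> = (tC^4 + tD^4) * TC^2 - 2 * tC^2 * tD^2 * TD^2" unfolding T2s T1s by algebra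
      finally show ?thesis using tB by (simp add: field_simps)
    qed
    have "2 * ((\<kappa>*e)^4 + (\<kappa>*f)^4) + 12 * (A*B*(\<kappa>*f)^2 + B*C*(\<kappa>*e)^2 + C*D*(\<kappa>*f)^2 + A*D*(\<kappa>*e)^2)
        = (\<kappa>^4 + 3 * \<kappa>^2 * tB / \<eta>^3) * (tC^2 * TB^2 - tD^2 * TA^2)"
      unfolding NS2 NS4 NS4' using eta0 by (simp add: field_simps; algebra)
    also have "\<dots> = 7 * ((tC^4 + tD^4) * TC^2 - 2 * tC^2 * tD^2 * TD^2) / (tB^2 * tC^2 * tD^2)"
      unfolding W k4 k2 e3 using tB tC tD by (simp add: field_simps; algebra)
    finally show ?thesis .
  qed
  have P3: "-24 * TA ^ 2 / tC ^ 2 + 2 * (tB ^ 4 - tD ^ 4) * TC ^ 2 / \<eta> ^ 6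
      = (-24 * tC^2 * tD^2 * TD^2 + (16 * tD^4 + 8 * tB^4) * TC^2) / (tB^2 * tC^2 * tD^2)"
  proof -
    have T1e: "TA^2 = (tC^2 * TD^2 - tD^2 * TC^2) / tB^2" using T1s tB by (simp add: field_simps)
    show ?thesis unfolding T1e e6 using tB tC tD by (simp add: field_simps; algebra)
  qed
  have fin: "((tC^4 + tD^4) * TC^2 - 10 * tC^2 * tD^2 * TD^2) / (tB^2 * tC^2 * tD^2)
       + 7 * ((tC^4 + tD^4) * TC^2 - 2 * tC^2 * tD^2 * TD^2) / (tB^2 * tC^2 * tD^2)
       = (-24 * tC^2 * tD^2 * TD^2 + (16 * tD^4 + 8 * tB^4) * TC^2) / (tB^2 * tC^2 * tD^2)"
    unfolding Jac using tB tC tD by (simp add: field_simps; algebra)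
  have "-2 * (A^4 + B^4 + C^4 + D^4) + 2 * ((\<kappa>*e)^4 + (\<kappa>*f)^4) + 6 * (A^2*B^2 + B^2*C^2 + C^2*D^2 + D^2*A^2)
        + 12 * (A*B*(\<kappa>*f)^2 + B*C*(\<kappa>*e)^2 + C*D*(\<kappa>*f)^2 + A*D*(\<kappa>*e)^2)
      = (-2 * (A^4 + B^4 + C^4 + D^4) + 6 * (A^2*B^2 + B^2*C^2 + C^2*D^2 + D^2*A^2))
        + (2 * ((\<kappa>*e)^4 + (\<kappa>*f)^4) + 12 * (A*B*(\<kappa>*f)^2 + B*C*(\<kappa>*e)^2 + C*D*(\<kappa>*f)^2 + A*D*(\<kappa>*e)^2))"
    by (simp add: algebra_simps)
  also have "\<dots> = -24 * TA ^ 2 / tC ^ 2 + 2 * (tB ^ 4 - tD ^ 4) * TC ^ 2 / \<eta> ^ 6"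
    unfolding P1 P2 fin P3 ..
  finally show ?thesis unfolding Let_def A_def[symmetric] B_def[symmetric] C_def[symmetric] D_def[symmetric] .
qed


lemma ep_one_half: "ep 1 (1/2) = -1"
proof -
  have "ep 1 (1/2) = exp (\<i> * of_real pi)" unfolding ep_def by (simp add: algebra_simps)
  also have "\<dots> = -1" by (simp only: exp_Euler cos_of_real sin_of_real) simp
  finally show ?thesis .
qed

lemma ep_one_quarter: "ep 1 (1/4) = \<i>"
proof -
  have "ep 1 (1/4) = exp (\<i> * of_real (pi/2))" unfolding ep_def by (simp add: algebra_simps)
  also have "\<dots> = \<i>" by (simp only: exp_Euler cos_of_real sin_of_real) simp
  finally show ?thesis .
qed

lemma ep_one_3quarter: "ep 1 (3/4) = - \<i>"
  using ep_mult_s[of 1 "1/2" "1/4"] ep_one_half ep_one_quarter by simp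

lemma rels:
  fixes \<tau> z :: complex
  assumes t: "Im \<tau> > 0"
  defines "a3 \<equiv> G z (2*\<tau>) 0" and "a2 \<equiv> G z (2*\<tau>) (1/2)"
    and "a4 \<equiv> G (z + 1/2) (2*\<tau>) 0" and "a1 \<equiv> G (z + 1/2) (2*\<tau>) (1/2)"
  shows "a3^2 + a2^2 = G z \<tau> 0 * G 0 \<tau> 0"
    and "a3^2 - a2^2 = G (z + 1/2) \<tau> 0 * G (1/2) \<tau> 0"
    and "a4^2 + a1^2 = G (z + 1/2) \<tau> 0 * G 0 \<tau> 0"
    and "a4^2 - a1^2 = G z \<tau> 0 * G (1/2) \<tau> 0"
    and "2 * a3 * a2 = G 0 \<tau> (1/2) * G z \<tau> (1/2)"
    and "2 * a4 * a1 = G 0 \<tau> (1/2) * G (z + 1/2) \<tau> (1/2)"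
proof -
  have sh0: "G (\<zeta> + 1) \<tau>' 0 = G \<zeta> \<tau>' 0" for \<zeta> \<tau>' using G_zeta_shift[of \<zeta> \<tau>' 0] by simp
  have sh1: "G (\<zeta> + 1) \<tau>' (1/2) = - G \<zeta> \<tau>' (1/2)" for \<zeta> \<tau>'
    using G_zeta_shift[of \<zeta> \<tau>' "1/2"] ep_one_half by simp
  have one: "G \<zeta> \<tau>' 1 = G \<zeta> \<tau>' 0" for \<zeta> \<tau>' using G_shift_a[of \<zeta> \<tau>' 0] by simp
  show "a3^2 + a2^2 = G z \<tau> 0 * G 0 \<tau> 0"
    using G_mult[OF t, of z 0 0 0] unfolding a3_def a2_def by (simp add: power2_eq_square)
  show "a3^2 - a2^2 = G (z + 1/2) \<tau> 0 * G (1/2) \<tau> 0"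
    using G_mult[OF t, of "z + 1/2" 0 "1/2" 0] unfolding a3_def a2_def
    by (simp add: power2_eq_square add.assoc sh0 sh1)
  show "a4^2 + a1^2 = G (z + 1/2) \<tau> 0 * G 0 \<tau> 0"
    using G_mult[OF t, of "z + 1/2" 0 0 0] unfolding a4_def a1_def by (simp add: power2_eq_square)
  have m: "z - 1/2 + 1 = z + 1/2" by simp
  have sh0': "G (z - 1/2) \<tau>' 0 = G (z + 1/2) \<tau>' 0" for \<tau>' using sh0[of "z - 1/2" \<tau>'] m by simp
  have sh1': "G (z - 1/2) \<tau>' (1/2) = - G (z + 1/2) \<tau>' (1/2)" for \<tau>' using sh1[of "z - 1/2" \<tau>'] m by simp
  show "a4^2 - a1^2 = G z \<tau> 0 * G (1/2) \<tau> 0"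
    using G_mult[OF t, of z 0 "1/2" 0] unfolding a4_def a1_def
    by (simp add: power2_eq_square sh0' sh1')
  show "2 * a3 * a2 = G 0 \<tau> (1/2) * G z \<tau> (1/2)"
    using G_mult[OF t, of z "1/2" 0 "1/2"] unfolding a3_def a2_def by (simp add: one mult.commute)
  show "2 * a4 * a1 = G 0 \<tau> (1/2) * G (z + 1/2) \<tau> (1/2)"
    using G_mult[OF t, of "z + 1/2" "1/2" 0 "1/2"] unfolding a4_def a1_def by (simp add: one mult.commute)
qed


lemma EF_rels:
  fixes \<tau> z :: complex
  assumes t: "Im \<tau> > 0"
  defines "f \<equiv> G z (2*\<tau>) (1/4)" and "e \<equiv> G z (2*\<tau>) (-1/4)"
  shows "f^2 + e^2 = G z \<tau> (1/2) * G 0 \<tau> 0"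
    and "f^2 - e^2 = \<i> * (- G (z + 1/2) \<tau> (1/2)) * G (1/2) \<tau> 0"
proof -
  have t2: "Im (2 * \<tau>) > 0" using t by simp
  have zz: "z + z = 2 * z" by simp
  have tt: "2 * (2 * \<tau>) = 4 * \<tau>" by simp
  define h where "h = (\<lambda>\<zeta> a. G \<zeta> (4 * \<tau>) a)"
  have ff: "f * f = h (2*z) (1/4) * h 0 0 + h (2*z) (3/4) * h 0 (1/2)"
    using G_mult[OF t2, of z "1/4" z "1/4"] unfolding f_def h_def zz tt by simp
  have m34: "G \<zeta> \<tau>' (- (1/4)) = G \<zeta> \<tau>' (3/4)" for \<zeta> \<tau>'
    using G_shift_a[of \<zeta> \<tau>' "-1/4"] by simp
  have ee: "e * e = h (2*z) (3/4) * h 0 0 + h (2*z) (1/4) * h 0 (1/2)"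
    using G_mult[OF t2, of z "-1/4" z "-1/4"] unfolding e_def h_def zz tt by (simp add: m34)
  have s1: "G z \<tau> (1/2) = h (2*z) (1/4) + h (2*z) (3/4)"
    using G_split[OF t, of z "1/2"] unfolding h_def by simp
  have s2: "G 0 \<tau> 0 = h 0 0 + h 0 (1/2)"
    using G_split[OF t, of 0 0] unfolding h_def by simp
  have s3: "G (1/2) \<tau> 0 = h 0 0 - h 0 (1/2)"
  proof -
    have "G (1/2) \<tau> 0 = h 1 0 + h 1 (1/2)" using G_split[OF t, of "1/2" 0] unfolding h_def by simp
    also have "h 1 0 = h 0 0" unfolding h_def using G_zeta_shift[of 0 "4*\<tau>" 0] by simp
    also have "h 1 (1/2) = - h 0 (1/2)" unfolding h_def using G_zeta_shift[of 0 "4*\<tau>" "1/2"] ep_one_half by simp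
    finally show ?thesis by simp
  qed
  have s4: "G (z + 1/2) \<tau> (1/2) = \<i> * h (2*z) (1/4) - \<i> * h (2*z) (3/4)"
  proof -
    have "G (z + 1/2) \<tau> (1/2) = h (2*z + 1) (1/4) + h (2*z + 1) (3/4)"
      using G_split[OF t, of "z + 1/2" "1/2"] unfolding h_def by (simp add: algebra_simps)
    also have "h (2*z + 1) (1/4) = \<i> * h (2*z) (1/4)"
      unfolding h_def using G_zeta_shift[of "2*z" "4*\<tau>" "1/4"] ep_one_quarter by simp
    also have "h (2*z + 1) (3/4) = - \<i> * h (2*z) (3/4)"
      unfolding h_def using G_zeta_shift[of "2*z" "4*\<tau>" "3/4"] ep_one_3quarter by simp
    finally show ?thesis by simp
  qed
  show "f^2 + e^2 = G z \<tau> (1/2) * G 0 \<tau> 0"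
    unfolding power2_eq_square ff ee s1 s2 by algebra
  show "f^2 - e^2 = \<i> * (- G (z + 1/2) \<tau> (1/2)) * G (1/2) \<tau> 0"
    unfolding power2_eq_square ff ee s3 s4 by (simp add: algebra_simps)
qed


lemma main_reduced:
  fixes Sa Sb :: "complex \<Rightarrow> complex" and \<tau> z :: complex
  assumes t: "Im \<tau> > 0"
    and sq3: "Sa \<tau> ^ 2 = theta3 0 \<tau> / eta \<tau>" and sq4: "Sb \<tau> ^ 2 = theta4 0 \<tau> / eta \<tau>"
    and eta0: "eta \<tau> \<noteq> 0"
    and H1: "eta (2*\<tau>) / eta \<tau> ^ 2 * theta4 0 (2*\<tau>) = 1"
    and H2: "2 * eta \<tau> ^ 3 = theta2 0 \<tau> * theta3 0 \<tau> * theta4 0 \<tau>"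
  shows "let
      A = (Sa \<tau> * theta3 z (2*\<tau>) + Sb \<tau> * theta4 z (2*\<tau>)) / (2 * eta \<tau>);
      C = (Sa \<tau> * theta3 z (2*\<tau>) - Sb \<tau> * theta4 z (2*\<tau>)) / (2 * eta \<tau>);
      B = (Sa \<tau> * theta2 z (2*\<tau>) + \<i> * Sb \<tau> * theta1 z (2*\<tau>)) / (2 * eta \<tau>);
      D = (Sa \<tau> * theta2 z (2*\<tau>) - \<i> * Sb \<tau> * theta1 z (2*\<tau>)) / (2 * eta \<tau>);
      E = eta (2*\<tau>) / eta \<tau> ^ 2 * ep \<tau> (1/16) * ep z (-1/4) * theta3 (z - \<tau>/2) (2*\<tau>);
      F = eta (2*\<tau>) / eta \<tau> ^ 2 * ep \<tau> (1/16) * ep z (1/4) * theta3 (z + \<tau>/2) (2*\<tau>);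
      NS1 = A^4 + B^4 + C^4 + D^4;
      NS2 = E^4 + F^4;
      NS3 = A^2*B^2 + B^2*C^2 + C^2*D^2 + D^2*A^2;
      NS4 = A*B*F^2 + B*C*E^2 + C*D*F^2 + A*D*E^2
    in -2*NS1 + 2*NS2 + 6*NS3 + 12*NS4
       = -24 * theta1 z \<tau> ^ 2 / theta3 0 \<tau> ^ 2
         + 2 * (theta2 0 \<tau> ^ 4 - theta4 0 \<tau> ^ 4) * theta3 z \<tau> ^ 2 / eta \<tau> ^ 6"
proof -
  define \<kappa> where "\<kappa> = eta (2*\<tau>) / eta \<tau> ^ 2"
  have Eeq: "eta (2*\<tau>) / eta \<tau> ^ 2 * ep \<tau> (1/16) * ep z (-1/4) * theta3 (z - \<tau>/2) (2*\<tau>)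
      = \<kappa> * G z (2*\<tau>) (-1/4)"
    unfolding \<kappa>_def by (subst E_G[symmetric]) (simp add: mult.assoc)
  have Feq: "eta (2*\<tau>) / eta \<tau> ^ 2 * ep \<tau> (1/16) * ep z (1/4) * theta3 (z + \<tau>/2) (2*\<tau>)
      = \<kappa> * G z (2*\<tau>) (1/4)"
    unfolding \<kappa>_def by (subst F_G[symmetric]) (simp add: mult.assoc)
  note R = rels[OF t, of z] and R0 = rels[OF t, of 0] and EF = EF_rels[OF t, of z]
  have A1z: "G (1/2) (2*\<tau>) (1/2) = 0" by (rule G_half_half)
  have K: "\<kappa>^2 * (G 0 \<tau> 0 * G (1/2) \<tau> 0) = 1"
  proof -
    have "G (1/2) (2*\<tau>) 0 ^ 2 = G 0 \<tau> 0 * G (1/2) \<tau> 0" using R0(4) A1z by simp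
    moreover have "\<kappa> * G (1/2) (2*\<tau>) 0 = 1" using H1 unfolding \<kappa>_def theta4_G by simp
    ultimately show ?thesis by (metis power_mult_distrib power_one)
  qed
  have Jac: "G 0 \<tau> 0 ^ 4 = G 0 \<tau> (1/2) ^ 4 + G (1/2) \<tau> 0 ^ 4"
  proof -
    have r1: "G 0 (2*\<tau>) 0 ^ 2 + G 0 (2*\<tau>) (1/2) ^ 2 = G 0 \<tau> 0 ^ 2" using R0(1) by (simp add: power2_eq_square)
    have r2: "G 0 (2*\<tau>) 0 ^ 2 - G 0 (2*\<tau>) (1/2) ^ 2 = G (1/2) \<tau> 0 ^ 2" using R0(2) by (simp add: power2_eq_square)
    have r5: "2 * G 0 (2*\<tau>) 0 * G 0 (2*\<tau>) (1/2) = G 0 \<tau> (1/2) ^ 2" using R0(5) by (simp add: power2_eq_square)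
    show ?thesis using r1 r2 r5 by algebra
  qed
  have Sa': "Sa \<tau> ^ 2 * eta \<tau> = G 0 \<tau> 0" using sq3 eta0 unfolding theta3_G by simp
  have Sb': "Sb \<tau> ^ 2 * eta \<tau> = G (1/2) \<tau> 0" using sq4 eta0 unfolding theta4_G by simp
  have R6': "2 * G (z + 1/2) (2*\<tau>) 0 * G (z + 1/2) (2*\<tau>) (1/2) = - G 0 \<tau> (1/2) * (- G (z + 1/2) \<tau> (1/2))"
    using R(6) by simp
  have J: "2 * eta \<tau> ^ 3 = G 0 \<tau> (1/2) * G 0 \<tau> 0 * G (1/2) \<tau> 0"
    using H2 unfolding theta2_G theta3_G theta4_G by simp
  have jj: "\<i> * \<i> = (-1::complex)" by simp
  note X = final_algebra[where j = \<i> and SA = "Sa \<tau>" and SB = "Sb \<tau>"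
      and aA = "G z (2*\<tau>) 0" and aB = "G z (2*\<tau>) (1/2)" and aC = "G (z + 1/2) (2*\<tau>) 0"
      and aD = "G (z + 1/2) (2*\<tau>) (1/2)" and e = "G z (2*\<tau>) (-1/4)" and f = "G z (2*\<tau>) (1/4)"
      and \<kappa> = \<kappa> and \<eta> = "eta \<tau>" and tB = "G 0 \<tau> (1/2)" and tC = "G 0 \<tau> 0" and tD = "G (1/2) \<tau> 0"
      and TA = "- G (z + 1/2) \<tau> (1/2)" and TB = "G z \<tau> (1/2)" and TC = "G z \<tau> 0" and TD = "G (z + 1/2) \<tau> 0",
      OF eta0 Sa' Sb' R(1) R(2) R(3) R(4) R(5) R6' EF(1) EF(2) K J Jac jj]
  show ?thesis unfolding Eeq Feq unfolding theta1_G theta2_G theta3_G theta4_G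
    using X by (simp add: Let_def)
qed

definition pp :: "complex \<Rightarrow> nat \<Rightarrow> complex" where
  "pp r n = (\<Prod>i<n. 1 - r ^ Suc i)"

definition PP :: "complex \<Rightarrow> complex" where
  "PP r = prodinf (\<lambda>i. 1 - r ^ Suc i)"

lemma pp_factor_nz: "norm (r::complex) < 1 \<Longrightarrow> 1 - r ^ Suc i \<noteq> 0"
proof
  assume "norm r < 1" "1 - r ^ Suc i = 0"
  then have "norm (r ^ Suc i) = 1" by simp
  moreover have "norm (r ^ Suc i) < 1"
  proof -
    have "norm r ^ Suc i < 1" using \<open>norm r < 1\<close> by (subst power_less_one_iff) auto
    then show ?thesis by (simp only: norm_power)
  qed
  ultimately show False by simp
qed

lemma pp_nz: "norm (r::complex) < 1 \<Longrightarrow> pp r n \<noteq> 0"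
  unfolding pp_def using pp_factor_nz by (simp add: prod_zero_iff)

lemma pp_convergent: "norm (r::complex) < 1 \<Longrightarrow> convergent_prod (\<lambda>i. 1 - r ^ Suc i)"
proof -
  assume r: "norm r < 1"
  have "summable (\<lambda>k. norm (- (r ^ Suc k)))"
  proof -
    have "summable (\<lambda>k. norm r ^ k)" using r by (simp add: summable_geometric)
    then have "summable (\<lambda>k. norm r * norm r ^ k)" by (rule summable_mult)
    then show ?thesis by (simp add: norm_power norm_mult)
  qed
  moreover have "- (r ^ Suc k) \<noteq> -1" for k using pp_factor_nz[OF r, of k] by auto
  ultimately have "convergent_prod (\<lambda>k. 1 + - (r ^ Suc k))"
    by (rule summable_imp_convergent_prod_complex)
  then show ?thesis by simp
qed

lemma pp_tendsto: "norm (r::complex) < 1 \<Longrightarrow> pp r \<longlonglongrightarrow> PP r"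
  unfolding pp_def PP_def
  using has_prod_imp_tendsto'[OF convergent_prod_has_prod[OF pp_convergent]] by simp

lemma PP_nz: "norm (r::complex) < 1 \<Longrightarrow> PP r \<noteq> 0"
  unfolding PP_def using prodinf_nonzero pp_convergent pp_factor_nz by blast

lemma tendsto_bounded_below:
  fixes X :: "nat \<Rightarrow> complex"
  assumes "X \<longlonglongrightarrow> L" "L \<noteq> 0" "\<And>n. X n \<noteq> 0"
  shows "\<exists>c>0. \<forall>n. c \<le> norm (X n)"
proof -
  have "eventually (\<lambda>n. norm (X n) > norm L / 2) sequentially"
    using tendsto_norm[OF assms(1)] assms(2) by (intro order_tendstoD) auto
  then obtain N where N: "\<And>n. n \<ge> N \<Longrightarrow> norm (X n) > norm L / 2"
    unfolding eventually_sequentially by auto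
  define c where "c = Min (insert (norm L / 2) ((\<lambda>n. norm (X n)) ` {..<N}))"
  have "c > 0" unfolding c_def using assms(2,3) by (subst Min_gr_iff) auto
  moreover have "c \<le> norm (X n)" for n
  proof (cases "n < N")
    case True then show ?thesis unfolding c_def by (intro Min_le) auto
  next
    case False
    then have "c \<le> norm L / 2" unfolding c_def by (intro Min_le) auto
    with N[of n] False show ?thesis by auto
  qed
  ultimately show ?thesis by blast
qed

lemma pp_bounds:
  fixes r :: complex
  assumes "norm r < 1"
  shows "\<exists>c>0. \<forall>n. c \<le> norm (pp r n)" and "\<exists>B. \<forall>n. norm (pp r n) \<le> B"
proof -
  show "\<exists>c>0. \<forall>n. c \<le> norm (pp r n)"
    using tendsto_bounded_below[OF pp_tendsto[OF assms] PP_nz[OF assms] pp_nz[OF assms]] .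
  have "bounded (range (pp r))" using convergent_imp_bounded pp_tendsto[OF assms] by blast
  then show "\<exists>B. \<forall>n. norm (pp r n) \<le> B" unfolding bounded_iff by auto
qed


lemma pp_0[simp]: "pp r 0 = 1" unfolding pp_def by simp
lemma pp_Suc: "pp r (Suc n) = pp r n * (1 - r ^ Suc n)" unfolding pp_def by simp

definition tri :: "nat \<Rightarrow> nat" where "tri k = (\<Sum>i<k. i)"
lemma tri_0[simp]: "tri 0 = 0" and tri_Suc: "tri (Suc k) = tri k + k"
  unfolding tri_def by simp_all

definition qb :: "complex \<Rightarrow> nat \<Rightarrow> nat \<Rightarrow> complex" where
  "qb Q N k = (if k \<le> N then pp Q N / (pp Q k * pp Q (N - k)) else 0)"

definition cq :: "complex \<Rightarrow> nat \<Rightarrow> nat \<Rightarrow> complex" where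
  "cq Q N k = Q ^ tri k * qb Q N k"

lemma cq_0: "norm Q < 1 \<Longrightarrow> cq Q N 0 = 1"
  unfolding cq_def qb_def using pp_nz[of Q N] by simp

lemma cq_gt: "k > N \<Longrightarrow> cq Q N k = 0"
  unfolding cq_def qb_def by simp

lemma pascal_field:
  fixes a b P u v T K W R :: complex
  assumes "a \<noteq> 0" "b \<noteq> 0" "u \<noteq> 0" "v \<noteq> 0" "K * W = K * v + R * u"
  shows "T * K * (P * W / (a * u * (b * v))) = T * K * (P / (a * u * b)) + R * (T * (P / (a * (b * v))))"
proof -
  have "T * K * (P * W / (a * u * (b * v))) = T * P * (K * W) / (a * u * b * v)" by (simp add: field_simps)
  also have "\<dots> = T * P * (K * v + R * u) / (a * u * b * v)" using assms(5) by simp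
  also have "\<dots> = T * K * (P / (a * u * b)) + R * (T * (P / (a * (b * v))))"
    using assms(1-4) by (simp add: field_simps)
  finally show ?thesis .
qed

lemma cq_pascal:
  assumes Q: "norm Q < 1" and k: "k \<le> N"
  shows "cq Q (Suc N) (Suc k) = cq Q N (Suc k) + Q ^ N * cq Q N k"
proof (cases "k = N")
  case True
  have "pp Q N \<noteq> 0" "pp Q (Suc N) \<noteq> 0" using pp_nz[OF Q] by auto
  then have "qb Q (Suc N) (Suc N) = 1" "qb Q N N = 1" unfolding qb_def by simp_all
  then show ?thesis unfolding True cq_def using cq_gt[of N "Suc N" Q]
    by (simp add: cq_def tri_Suc power_add)
next
  case False
  define M where "M = N - k - 1"
  have N: "N = k + M + 1" using k False unfolding M_def by simp
  have a: "pp Q k \<noteq> 0" and b: "pp Q M \<noteq> 0" using pp_nz[OF Q] by auto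
  have u: "1 - Q ^ Suc k \<noteq> 0" and v: "1 - Q ^ Suc M \<noteq> 0" using pp_factor_nz[OF Q] by auto
  have e1: "Suc N - Suc k = Suc M" and e2: "N - Suc k = M" and e3: "N - k = Suc M" using N by auto
  have q1: "qb Q (Suc N) (Suc k) = pp Q N * (1 - Q ^ Suc N) / (pp Q k * (1 - Q ^ Suc k) * (pp Q M * (1 - Q ^ Suc M)))"
    unfolding qb_def e1 using k by (simp only: pp_Suc if_True Suc_le_mono)
  have q2: "qb Q N (Suc k) = pp Q N / (pp Q k * (1 - Q ^ Suc k) * pp Q M)"
    unfolding qb_def e2 using N by (simp only: pp_Suc) simp
  have q3: "qb Q N k = pp Q N / (pp Q k * (pp Q M * (1 - Q ^ Suc M)))"
    unfolding qb_def e3 using k by (simp only: pp_Suc if_True)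
  have key: "Q ^ k * (1 - Q ^ Suc N) = Q ^ k * (1 - Q ^ Suc M) + Q ^ N * (1 - Q ^ Suc k)"
  proof -
    have "Q ^ Suc N = Q ^ k * Q ^ M * Q * Q" "Q ^ N = Q ^ k * Q ^ M * Q" "Q ^ Suc M = Q ^ M * Q" "Q ^ Suc k = Q ^ k * Q"
      unfolding N by (simp_all add: power_add)
    then show ?thesis by (simp add: algebra_simps)
  qed
  have "cq Q (Suc N) (Suc k) = Q ^ tri k * Q ^ k * qb Q (Suc N) (Suc k)"
    unfolding cq_def tri_Suc power_add ..
  also have "\<dots> = Q ^ tri k * Q ^ k * qb Q N (Suc k) + Q ^ N * (Q ^ tri k * qb Q N k)"
    unfolding q1 q2 q3 by (rule pascal_field[OF a b u v key])
  also have "\<dots> = cq Q N (Suc k) + Q ^ N * cq Q N k"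
    unfolding cq_def tri_Suc power_add ..
  finally show ?thesis .
qed

lemma rothe:
  assumes Q: "norm Q < 1"
  shows "(\<Prod>i<N. 1 + Q ^ i * t) = (\<Sum>k\<le>N. cq Q N k * t ^ k)"
proof (induction N)
  case 0 then show ?case by (simp add: cq_0[OF Q])
next
  case (Suc N)
  have S1: "(\<Sum>k\<le>N. cq Q N k * t ^ k) = 1 + (\<Sum>k<N. cq Q N (Suc k) * t ^ Suc k)"
  proof -
    have "(\<Sum>k\<le>N. cq Q N k * t ^ k) = (\<Sum>k\<le>Suc N. cq Q N k * t ^ k)"
      using cq_gt[of N "Suc N" Q] by simp
    also have "\<dots> = cq Q N 0 * t ^ 0 + (\<Sum>k\<le>N. cq Q N (Suc k) * t ^ Suc k)"
      by (rule sum.atMost_Suc_shift)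
    also have "(\<Sum>k\<le>N. cq Q N (Suc k) * t ^ Suc k) = (\<Sum>k<N. cq Q N (Suc k) * t ^ Suc k)"
      using cq_gt[of N "Suc N" Q] by (simp add: lessThan_Suc_atMost[symmetric])
    finally show ?thesis by (simp add: cq_0[OF Q])
  qed
  have S2: "Q ^ N * t * (\<Sum>k\<le>N. cq Q N k * t ^ k) = (\<Sum>k\<le>N. Q ^ N * cq Q N k * t ^ Suc k)"
    by (simp add: sum_distrib_left algebra_simps)
  have "(\<Prod>i<Suc N. 1 + Q ^ i * t) = (\<Sum>k\<le>N. cq Q N k * t ^ k) * (1 + Q ^ N * t)"
    using Suc.IH by simp
  also have "\<dots> = (\<Sum>k\<le>N. cq Q N k * t ^ k) + Q ^ N * t * (\<Sum>k\<le>N. cq Q N k * t ^ k)"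
    by (simp add: algebra_simps)
  also have "\<dots> = 1 + (\<Sum>k<N. cq Q N (Suc k) * t ^ Suc k) + (\<Sum>k\<le>N. Q ^ N * cq Q N k * t ^ Suc k)"
    unfolding S2 by (simp only: S1)
  also have "\<dots> = 1 + (\<Sum>k\<le>N. (cq Q N (Suc k) + Q ^ N * cq Q N k) * t ^ Suc k)"
    using cq_gt[of N "Suc N" Q] by (simp add: lessThan_Suc_atMost[symmetric] sum.distrib algebra_simps)
  also have "\<dots> = 1 + (\<Sum>k\<le>N. cq Q (Suc N) (Suc k) * t ^ Suc k)"
    using cq_pascal[OF Q] by simp
  also have "\<dots> = (\<Sum>k\<le>Suc N. cq Q (Suc N) k * t ^ k)"
    by (subst sum.atMost_Suc_shift) (simp add: cq_0[OF Q])
  finally show ?case .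
qed


lemma prod_split2:
  fixes g :: "nat \<Rightarrow> 'a::comm_monoid_mult"
  shows "(\<Prod>i<n+n. g i) = (\<Prod>m<n. g (m + n)) * (\<Prod>m<n. g (n - Suc m))"
proof -
  have "{..<n+n} = {..<n} \<union> {n..<n+n}" by auto
  then have "(\<Prod>i<n+n. g i) = (\<Prod>i<n. g i) * (\<Prod>i\<in>{n..<n+n}. g i)"
    by (simp add: prod.union_disjoint ivl_disj_int)
  also have "(\<Prod>i\<in>{n..<n+n}. g i) = (\<Prod>m<n. g (m + n))"
    using prod.shift_bounds_nat_ivl[of g 0 n n] by (simp add: atLeast0LessThan)
  also have "(\<Prod>i<n. g i) = (\<Prod>m<n. g (n - Suc m))" by (rule prod.nat_diff_reindex[symmetric])
  finally show ?thesis by (simp add: mult.commute)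
qed

lemma sum_split2:
  fixes h :: "nat \<Rightarrow> 'a::comm_monoid_add"
  shows "(\<Sum>k\<le>n+n. h k) = (\<Sum>j\<le>n. h (j + n)) + (\<Sum>j<n. h (n - Suc j))"
proof -
  have "{..n+n} = {..<n} \<union> {n..n+n}" by auto
  then have "(\<Sum>k\<le>n+n. h k) = (\<Sum>k<n. h k) + (\<Sum>k\<in>{n..n+n}. h k)"
    by (simp add: sum.union_disjoint ivl_disj_int)
  also have "(\<Sum>k\<in>{n..n+n}. h k) = (\<Sum>j\<le>n. h (j + n))"
    using sum.shift_bounds_cl_nat_ivl[of h 0 n n] by (simp add: atLeast0AtMost)
  also have "(\<Sum>k<n. h k) = (\<Sum>j<n. h (n - Suc j))" by (rule sum.nat_diff_reindex[symmetric])
  finally show ?thesis by (simp add: add.commute)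
qed

lemma tri_sq: "2 * tri m + m = m * m"
  by (induction m) (simp_all add: tri_Suc algebra_simps)

lemma qb_sym: "k \<le> N \<Longrightarrow> qb Q N (N - k) = qb Q N k"
  unfolding qb_def by (simp add: mult.commute)

definition Pn :: "complex \<Rightarrow> complex \<Rightarrow> nat \<Rightarrow> complex" where
  "Pn x w n = (\<Prod>m<n. (1 + x ^ (2*m+1) * w) * (1 + x ^ (2*m+1) / w))"

lemma prod_odd_powers: "(\<Prod>m<n. (x::complex) ^ (2*m+1)) = x ^ (n * n)"
proof (induction n)
  case (Suc n)
  have e: "n * n + (2 * n + 1) = Suc n * Suc n" by simp
  have "(\<Prod>m<Suc n. x ^ (2*m+1)) = x ^ (n*n) * x ^ (2*n+1)" using Suc by simp
  also have "\<dots> = x ^ (Suc n * Suc n)" by (simp only: power_add[symmetric] e)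
  finally show ?case .
qed simp

lemma jtp_finite:
  fixes x w :: complex
  assumes x: "norm x < 1" "x \<noteq> 0" and w: "w \<noteq> 0"
  shows "Pn x w n = (\<Sum>j\<le>n. x ^ (j*j) * w ^ j * qb (x^2) (n+n) (j+n))
                   + (\<Sum>j<n. x ^ (Suc j * Suc j) / w ^ Suc j * qb (x^2) (n+n) (Suc j + n))"
proof -
  define Q where "Q = x^2"
  have Q: "norm Q < 1" unfolding Q_def using x by (simp add: norm_power power_less_one_iff)
  define t where "t = w * x / x ^ (n+n)"
  have x2n: "x ^ (n * 2) = x ^ n * x ^ n" "x ^ (2 * n) = x ^ n * x ^ n" by (simp_all add: mult_2_right mult_2 power_add)
  have R: "(\<Prod>i<n+n. 1 + Q ^ i * t) = (\<Sum>k\<le>n+n. cq Q (n+n) k * t ^ k)" by (rule rothe[OF Q])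
  have L: "(\<Prod>i<n+n. 1 + Q ^ i * t) = (w ^ n / x ^ (n*n)) * Pn x w n"
  proof -
    have f1: "1 + Q ^ (m + n) * t = 1 + x ^ (2*m+1) * w" for m
      unfolding Q_def t_def using x(2) by (simp add: power_mult[symmetric] power_add field_simps x2n)
    have f2: "1 + Q ^ (n - Suc m) * t = (w / x ^ (2*m+1)) * (1 + x ^ (2*m+1) / w)" if "m < n" for m
    proof -
      have e: "n + n = 2 * (n - Suc m) + (2 * m + 1) + 1" using that by simp
      have ee: "x ^ (n+n) = x ^ (2 * (n - Suc m)) * x ^ (2 * m + 1) * x"
        by (subst e) (simp only: power_add power_one_right)
      have "Q ^ (n - Suc m) * t = x ^ (2 * (n - Suc m)) * (w * x) / (x ^ (2 * (n - Suc m)) * x ^ (2 * m + 1) * x)"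
        unfolding Q_def t_def ee by (simp add: power_mult)
      also have "\<dots> = w / x ^ (2*m+1)" using x(2) by (simp add: field_simps)
      finally have "Q ^ (n - Suc m) * t = w / x ^ (2*m+1)" .
      then show ?thesis using x(2) w by (simp add: field_simps)
    qed
    have "(\<Prod>i<n+n. 1 + Q ^ i * t) = (\<Prod>m<n. 1 + x ^ (2*m+1) * w) * (\<Prod>m<n. (w / x ^ (2*m+1)) * (1 + x ^ (2*m+1) / w))"
      unfolding prod_split2 f1 using f2 by simp
    also have "\<dots> = (\<Prod>m<n. w / x ^ (2*m+1)) * Pn x w n"
      unfolding Pn_def prod.distrib by (simp add: algebra_simps)
    also have "(\<Prod>m<n. w / x ^ (2*m+1)) = w ^ n / x ^ (n*n)"
      by (simp only: prod_dividef prod_odd_powers prod_constant card_lessThan)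
    finally show ?thesis .
  qed
  have T1: "cq Q (n+n) (j+n) * t ^ (j+n) = (w ^ n / x ^ (n*n)) * (x ^ (j*j) * w ^ j * qb Q (n+n) (j+n))" if "j \<le> n" for j
  proof -
    have e: "2 * tri (j+n) + (j+n) + n * n = (n+n) * (j+n) + j * j"
      using tri_sq[of "j+n"] by (simp add: algebra_simps)
    have "x ^ (2 * tri (j+n)) * x ^ (j+n) * x ^ (n*n) = x ^ ((n+n) * (j+n)) * x ^ (j*j)"
      unfolding power_add[symmetric] e ..
    then show ?thesis unfolding cq_def Q_def t_def using x(2) w
      by (simp add: power_mult[symmetric] field_simps power_mult_distrib power_add)
  qed
  have T2: "cq Q (n+n) (n - Suc j) * t ^ (n - Suc j) = (w ^ n / x ^ (n*n)) * (x ^ (Suc j * Suc j) / w ^ Suc j * qb Q (n+n) (Suc j + n))" if "j < n" for j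
  proof -
    define k where "k = n - Suc j"
    have nk: "n = k + Suc j" unfolding k_def using that by simp
    have e: "2 * tri k + k + n * n = (n+n) * k + Suc j * Suc j"
      using tri_sq[of k] unfolding nk by (simp add: algebra_simps)
    have ex: "x ^ (2 * tri k) * x ^ k * x ^ (n*n) = x ^ ((n+n) * k) * x ^ (Suc j * Suc j)"
      unfolding power_add[symmetric] e ..
    have ew: "w ^ n = w ^ k * w ^ Suc j" unfolding nk power_add ..
    have qs: "qb Q (n+n) k = qb Q (n+n) (Suc j + n)"
    proof -
      have "n + n - k = Suc j + n" unfolding nk by simp
      then show ?thesis using qb_sym[of k "n+n" Q] unfolding nk by simp
    qed
    show ?thesis unfolding k_def[symmetric] cq_def Q_def t_def qs[unfolded Q_def] using x(2) w ex ew
      by (simp add: power_mult[symmetric] field_simps power_mult_distrib power_add)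
  qed
  have "(w ^ n / x ^ (n*n)) * Pn x w n = (\<Sum>k\<le>n+n. cq Q (n+n) k * t ^ k)" using L R by simp
  also have "\<dots> = (\<Sum>j\<le>n. cq Q (n+n) (j+n) * t ^ (j+n)) + (\<Sum>j<n. cq Q (n+n) (n - Suc j) * t ^ (n - Suc j))"
    by (rule sum_split2)
  also have "\<dots> = (w ^ n / x ^ (n*n)) * ((\<Sum>j\<le>n. x ^ (j*j) * w ^ j * qb (x^2) (n+n) (j+n))
                   + (\<Sum>j<n. x ^ (Suc j * Suc j) / w ^ Suc j * qb (x^2) (n+n) (Suc j + n)))"
    using T1 T2 unfolding Q_def by (simp add: sum_distrib_left distrib_left)
  finally show ?thesis using x(2) w by simp
qed


lemma pp_lim_comp:
  assumes r: "norm (r::complex) < 1" and g: "filterlim g sequentially sequentially"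
  shows "(\<lambda>n. pp r (g n)) \<longlonglongrightarrow> PP r"
  using filterlim_compose[OF pp_tendsto[OF r] g] .

lemma qb_lim1:
  assumes Q: "norm Q < 1"
  shows "(\<lambda>n. qb Q (n+n) (j+n)) \<longlonglongrightarrow> 1 / PP Q"
proof -
  have l1: "(\<lambda>n. pp Q (n+n)) \<longlonglongrightarrow> PP Q"
    by (rule pp_lim_comp[OF Q]) (rule filterlim_subseq, auto simp: strict_mono_def)
  have l2: "(\<lambda>n. pp Q (n + j)) \<longlonglongrightarrow> PP Q"
    by (rule pp_lim_comp[OF Q]) (rule filterlim_add_const_nat_at_top)
  have l3: "(\<lambda>n. pp Q (n - j)) \<longlonglongrightarrow> PP Q"
    by (rule pp_lim_comp[OF Q]) (rule filterlim_minus_const_nat_at_top)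
  have "(\<lambda>n. pp Q (n+n) / (pp Q (n + j) * pp Q (n - j))) \<longlonglongrightarrow> PP Q / (PP Q * PP Q)"
    using PP_nz[OF Q] by (intro tendsto_intros l1 l2 l3) simp
  moreover have "eventually (\<lambda>n. pp Q (n+n) / (pp Q (n + j) * pp Q (n - j)) = qb Q (n+n) (j+n)) sequentially"
    using eventually_ge_at_top[of j]
  proof eventually_elim
    case (elim n)
    then have "n + n - (j + n) = n - j" by simp
    with elim show ?case unfolding qb_def by (simp add: add.commute)
  qed
  ultimately have "(\<lambda>n. qb Q (n+n) (j+n)) \<longlonglongrightarrow> PP Q / (PP Q * PP Q)" by (rule Lim_transform_eventually)
  then show ?thesis using PP_nz[OF Q] by simp
qed

lemma qb_lim2:
  assumes Q: "norm Q < 1"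
  shows "(\<lambda>n. qb Q (n+n) (Suc j+n)) \<longlonglongrightarrow> 1 / PP Q"
  using qb_lim1[OF Q, of "Suc j"] .

lemma qb_bound:
  assumes Q: "norm Q < 1"
  shows "\<exists>C. \<forall>N k. norm (qb Q N k) \<le> C"
proof -
  obtain c where c: "c > 0" "\<And>n. c \<le> norm (pp Q n)" using pp_bounds(1)[OF Q] by blast
  obtain B where B: "\<And>n. norm (pp Q n) \<le> B" using pp_bounds(2)[OF Q] by blast
  have B0: "B \<ge> 0" using B[of 0] by simp
  have "norm (qb Q N k) \<le> B / (c * c)" for N k
  proof (cases "k \<le> N")
    case True
    have "norm (qb Q N k) = norm (pp Q N) / (norm (pp Q k) * norm (pp Q (N - k)))"
      unfolding qb_def using True by (simp add: norm_divide norm_mult)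
    also have "\<dots> \<le> B / (c * c)"
      using c B B0 by (intro frac_le mult_mono) auto
    finally show ?thesis .
  next
    case False then show ?thesis unfolding qb_def using B0 c by simp
  qed
  then show ?thesis by blast
qed

lemma summable_gauss:
  fixes x :: complex and c :: real
  assumes x: "norm x < 1" and c: "c \<ge> 0"
  shows "summable (\<lambda>j. norm x ^ (j*j) * c ^ j)"
proof -
  have "(\<lambda>j. norm x ^ j * c) \<longlonglongrightarrow> 0 * c"
    by (intro tendsto_intros LIMSEQ_power_zero) (use x in simp)
  then have l: "(\<lambda>j. norm x ^ j * c) \<longlonglongrightarrow> 0" by simp
  have "eventually (\<lambda>j. norm x ^ j * c < 1/2) sequentially"
    using order_tendstoD(2)[OF l, of "1/2"] by simp
  then obtain N where N: "\<And>j. j \<ge> N \<Longrightarrow> norm x ^ j * c < 1/2" unfolding eventually_sequentially by auto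
  show ?thesis
  proof (rule summable_ratio_test[of "1/2" N])
    fix j assume j: "j \<ge> N"
    have "norm x ^ (2*j+1) \<le> norm x ^ j" using x by (intro power_decreasing) auto
    then have "norm x ^ (2*j+1) * c \<le> norm x ^ j * c" using c by (rule mult_right_mono)
    then have r: "norm x ^ (2*j+1) * c \<le> 1/2" using N[OF j] by linarith
    have acl: "\<And>a b d e :: real. a * b * (e * d) = a * d * (b * e)" by (simp add: ac_simps)
    have e: "Suc j * Suc j = j * j + (2*j+1)" by simp
    have F: "norm x ^ (Suc j * Suc j) = norm x ^ (j*j) * norm x ^ (2*j+1)" unfolding e by (rule power_add)
    have eq: "norm x ^ (Suc j * Suc j) * c ^ Suc j = (norm x ^ (j*j) * c ^ j) * (norm x ^ (2*j+1) * c)"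
      unfolding F power_Suc[of c j] by (rule acl)
    have f0: "norm x ^ (j*j) * c ^ j \<ge> 0" using c by simp
    have "norm x ^ (Suc j * Suc j) * c ^ Suc j \<le> (norm x ^ (j*j) * c ^ j) * (1/2)"
      unfolding eq using r f0 by (rule mult_left_mono)
    moreover have "norm x ^ (Suc j * Suc j) * c ^ Suc j \<ge> 0" using c by simp
    ultimately show "norm (norm x ^ (Suc j * Suc j) * c ^ Suc j) \<le> 1/2 * norm (norm x ^ (j*j) * c ^ j)"
      using f0 by simp
  qed simp
qed


lemma jtp_lim:
  fixes x w :: complex
  assumes x: "norm x < 1" "x \<noteq> 0" and w: "w \<noteq> 0"
  shows "Pn x w \<longlonglongrightarrow> ((\<Sum>j. x ^ (j*j) * w ^ j) + (\<Sum>j. x ^ (Suc j * Suc j) / w ^ Suc j)) / PP (x^2)"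
proof -
  define Q where "Q = x^2"
  have Q: "norm Q < 1" unfolding Q_def using x by (simp add: norm_power power_less_one_iff)
  obtain C where C: "\<And>N k. norm (qb Q N k) \<le> C" using qb_bound[OF Q] by blast
  define a where "a = (\<lambda>j n. if j \<le> n then x ^ (j*j) * w ^ j * qb Q (n+n) (j+n) else 0)"
  define b where "b = (\<lambda>j n. if j < n then x ^ (Suc j * Suc j) / w ^ Suc j * qb Q (n+n) (Suc j+n) else 0)"
  have sa: "summable (\<lambda>j. C * (norm x ^ (j*j) * norm w ^ j))"
    using summable_gauss[OF x(1), of "norm w"] by (intro summable_mult) simp
  have sb0: "summable (\<lambda>j. norm x ^ (Suc j * Suc j) / norm w ^ Suc j)"
  proof -
    have "summable (\<lambda>j. norm x ^ (j*j) * (1 / norm w) ^ j)" using summable_gauss[OF x(1), of "1 / norm w"] by simp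
    then have "summable (\<lambda>j. norm x ^ (Suc j * Suc j) * (1 / norm w) ^ Suc j)"
      by (subst summable_Suc_iff)
    moreover have "(\<lambda>j. norm x ^ (Suc j * Suc j) * (1 / norm w) ^ Suc j) = (\<lambda>j. norm x ^ (Suc j * Suc j) / norm w ^ Suc j)"
      by (rule ext) (simp only: power_one_over times_divide_eq_right mult_1_right)
    ultimately show ?thesis by (simp only:)
  qed
  have sb: "summable (\<lambda>j. C * (norm x ^ (Suc j * Suc j) / norm w ^ Suc j))"
    using sb0 by (rule summable_mult)
  have TA: "(\<lambda>n. \<Sum>j. a j n) \<longlonglongrightarrow> (\<Sum>j. x ^ (j*j) * w ^ j * (1 / PP Q))"
  proof -
    have "eventually (\<lambda>n. summable (\<lambda>j. norm (a j n))) sequentially \<and>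
          summable (\<lambda>n. norm (x ^ (n*n) * w ^ n * (1 / PP Q))) \<and>
          ((\<lambda>n. \<Sum>j. a j n) \<longlonglongrightarrow> (\<Sum>j. x ^ (j*j) * w ^ j * (1 / PP Q)))"
    proof (rule tannerys_theorem[OF _ _ sa])
      fix j
      have "(\<lambda>n. x ^ (j*j) * w ^ j * qb Q (n+n) (j+n)) \<longlonglongrightarrow> x ^ (j*j) * w ^ j * (1 / PP Q)"
        by (intro tendsto_intros qb_lim1[OF Q])
      moreover have "eventually (\<lambda>n. x ^ (j*j) * w ^ j * qb Q (n+n) (j+n) = a j n) sequentially"
        using eventually_ge_at_top[of j] by eventually_elim (simp add: a_def)
      ultimately show "(\<lambda>n. a j n) \<longlonglongrightarrow> x ^ (j*j) * w ^ j * (1 / PP Q)"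
        by (rule Lim_transform_eventually)
    next
      have "norm (a j n) \<le> C * (norm x ^ (j*j) * norm w ^ j)" for j n
      proof -
        have C0: "C \<ge> 0" using C[of 0 0] norm_ge_zero order_trans by blast
        show ?thesis
        proof (cases "j \<le> n")
          case True
          have "norm (a j n) = (norm x ^ (j*j) * norm w ^ j) * norm (qb Q (n+n) (j+n))"
            unfolding a_def using True by (simp add: norm_mult norm_power)
          also have "\<dots> \<le> (norm x ^ (j*j) * norm w ^ j) * C"
            by (rule mult_left_mono[OF C]) simp
          finally show ?thesis by (simp add: mult.commute)
        next
          case False then show ?thesis unfolding a_def using C0 by simp
        qed
      qed
      then show "\<forall>\<^sub>F (j, n) in sequentially \<times>\<^sub>F sequentially. norm (a j n) \<le> C * (norm x ^ (j*j) * norm w ^ j)"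
        by (intro always_eventually) auto
    qed simp
    then show ?thesis by blast
  qed
  have TB: "(\<lambda>n. \<Sum>j. b j n) \<longlonglongrightarrow> (\<Sum>j. x ^ (Suc j * Suc j) / w ^ Suc j * (1 / PP Q))"
  proof -
    have "eventually (\<lambda>n. summable (\<lambda>j. norm (b j n))) sequentially \<and>
          summable (\<lambda>j. norm (x ^ (Suc j * Suc j) / w ^ Suc j * (1 / PP Q))) \<and>
          ((\<lambda>n. \<Sum>j. b j n) \<longlonglongrightarrow> (\<Sum>j. x ^ (Suc j * Suc j) / w ^ Suc j * (1 / PP Q)))"
    proof (rule tannerys_theorem[OF _ _ sb])
      fix j
      have "(\<lambda>n. x ^ (Suc j * Suc j) / w ^ Suc j * qb Q (n+n) (Suc j+n)) \<longlonglongrightarrow> x ^ (Suc j * Suc j) / w ^ Suc j * (1 / PP Q)"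
        by (intro tendsto_intros qb_lim2[OF Q])
      moreover have "eventually (\<lambda>n. x ^ (Suc j * Suc j) / w ^ Suc j * qb Q (n+n) (Suc j+n) = b j n) sequentially"
        using eventually_gt_at_top[of j] by eventually_elim (simp add: b_def)
      ultimately show "(\<lambda>n. b j n) \<longlonglongrightarrow> x ^ (Suc j * Suc j) / w ^ Suc j * (1 / PP Q)"
        by (rule Lim_transform_eventually)
    next
      have "norm (b j n) \<le> C * (norm x ^ (Suc j * Suc j) / norm w ^ Suc j)" for j n
      proof -
        have C0: "C \<ge> 0" using C[of 0 0] norm_ge_zero order_trans by blast
        show ?thesis
        proof (cases "j < n")
          case True
          have "norm (b j n) = (norm x ^ (Suc j * Suc j) / norm w ^ Suc j) * norm (qb Q (n+n) (Suc j+n))"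
            unfolding b_def using True by (simp only: if_True norm_mult norm_power norm_divide)
          also have "\<dots> \<le> (norm x ^ (Suc j * Suc j) / norm w ^ Suc j) * C"
            by (rule mult_left_mono[OF C]) simp
          finally show ?thesis by (simp add: mult.commute)
        next
          case False then show ?thesis unfolding b_def using C0 by simp
        qed
      qed
      then show "\<forall>\<^sub>F (j, n) in sequentially \<times>\<^sub>F sequentially. norm (b j n) \<le> C * (norm x ^ (Suc j * Suc j) / norm w ^ Suc j)"
        by (intro always_eventually) auto
    qed simp
    then show ?thesis by blast
  qed
  have "Pn x w n = (\<Sum>j. a j n) + (\<Sum>j. b j n)" for n
  proof -
    have "(\<Sum>j. a j n) = (\<Sum>j\<le>n. x ^ (j*j) * w ^ j * qb Q (n+n) (j+n))"
      by (subst suminf_finite[of "{..n}"]) (auto simp: a_def)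
    moreover have "(\<Sum>j. b j n) = (\<Sum>j<n. x ^ (Suc j * Suc j) / w ^ Suc j * qb Q (n+n) (Suc j+n))"
      by (subst suminf_finite[of "{..<n}"]) (auto simp: b_def)
    ultimately show ?thesis using jtp_finite[OF x w, of n] unfolding Q_def by simp
  qed
  then have "Pn x w = (\<lambda>n. (\<Sum>j. a j n) + (\<Sum>j. b j n))" by (rule ext)
  moreover have "(\<lambda>n. (\<Sum>j. a j n) + (\<Sum>j. b j n)) \<longlonglongrightarrow> (\<Sum>j. x ^ (j*j) * w ^ j * (1 / PP Q)) + (\<Sum>j. x ^ (Suc j * Suc j) / w ^ Suc j * (1 / PP Q))"
    using TA TB by (rule tendsto_add)
  moreover have "(\<Sum>j. x ^ (j*j) * w ^ j * (1 / PP Q)) + (\<Sum>j. x ^ (Suc j * Suc j) / w ^ Suc j * (1 / PP Q))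
      = ((\<Sum>j. x ^ (j*j) * w ^ j) + (\<Sum>j. x ^ (Suc j * Suc j) / w ^ Suc j)) / PP (x^2)"
  proof -
    have s1: "summable (\<lambda>j. x ^ (j*j) * w ^ j)"
      by (rule summable_norm_cancel, rule summable_comparison_test[OF _ summable_gauss[OF x(1), of "norm w"]])
         (auto simp: norm_mult norm_power)
    have s2: "summable (\<lambda>j. x ^ (Suc j * Suc j) / w ^ Suc j)"
    proof -
      have "norm (x ^ (Suc j * Suc j) / w ^ Suc j) = norm x ^ (Suc j * Suc j) / norm w ^ Suc j" for j
        by (simp only: norm_divide norm_power)
      then have "summable (\<lambda>j. norm (x ^ (Suc j * Suc j) / w ^ Suc j))" using sb0 by simp
      then show ?thesis by (rule summable_norm_cancel)
    qed
    show ?thesis using suminf_mult2[OF s1, of "1 / PP Q"] suminf_mult2[OF s2, of "1 / PP Q"]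
      unfolding Q_def by (simp add: add_divide_distrib)
  qed
  ultimately show ?thesis by simp
qed

lemma int_split:
  fixes f :: "int \<Rightarrow> complex"
  assumes f: "f summable_on UNIV"
  shows "infsum f UNIV = (\<Sum>j. f (int j)) + (\<Sum>j. f (- int (Suc j)))"
proof -
  have i1: "inj (int)" by (simp add: inj_def)
  have i2: "inj (\<lambda>j. - int (Suc j))" by (simp add: inj_def)
  have s1: "f summable_on range int" using f by (rule summable_on_subset_banach) simp
  have s2: "f summable_on range (\<lambda>j. - int (Suc j))" using f by (rule summable_on_subset_banach) simp
  have h1: "((\<lambda>j. f (int j)) has_sum infsum f (range int)) UNIV"
    using has_sum_reindex[OF i1, of f "infsum f (range int)"] s1 by (simp add: o_def)
  have h2: "((\<lambda>j. f (- int (Suc j))) has_sum infsum f (range (\<lambda>j. - int (Suc j)))) UNIV"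
    using has_sum_reindex[OF i2, of f "infsum f (range (\<lambda>j. - int (Suc j)))"] has_sum_infsum[OF s2] by (simp add: o_def)
  have U: "(UNIV::int set) = range int \<union> range (\<lambda>n. - int (Suc n))"
  proof -
    have "x \<in> range int \<union> range (\<lambda>n. - int (Suc n))" for x :: int
    proof (cases "x \<ge> 0")
      case True then show ?thesis by (auto intro: image_eqI[of _ _ "nat x"])
    next
      case False then show ?thesis by (auto intro!: image_eqI[of _ _ "nat (- x - 1)"])
    qed
    then show ?thesis by auto
  qed
  have D: "range int \<inter> range (\<lambda>n. - int (Suc n)) = {}" by auto
  have "infsum f UNIV = infsum f (range int) + infsum f (range (\<lambda>j. - int (Suc j)))"
    using infsum_Un_disjoint[OF s1 s2 D] U by simp
  also have "infsum f (range int) = (\<Sum>j. f (int j))" using has_sum_imp_sums[OF h1] sums_unique by auto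
  also have "infsum f (range (\<lambda>j. - int (Suc j))) = (\<Sum>j. f (- int (Suc j)))"
    using has_sum_imp_sums[OF h2] sums_unique by auto
  finally show ?thesis .
qed

definition SS :: "complex \<Rightarrow> complex \<Rightarrow> complex" where
  "SS x w = (\<Sum>j. x ^ (j*j) * w ^ j) + (\<Sum>j. x ^ (Suc j * Suc j) / w ^ Suc j)"

lemma ep_nat_mult: "ep \<tau> (of_nat k * s) = ep \<tau> s ^ k"
  unfolding ep_def by (simp add: exp_of_nat_mult[symmetric] algebra_simps)

lemma SS_jtp:
  assumes "norm x < 1" "x \<noteq> 0" "w \<noteq> 0" "Pn x w \<longlonglongrightarrow> L"
  shows "SS x w = PP (x^2) * L"
proof -
  have "SS x w / PP (x^2) = L" using jtp_lim[OF assms(1-3)] assms(4) LIMSEQ_unique unfolding SS_def by blast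
  moreover have "PP (x^2) \<noteq> 0" using assms(1) by (intro PP_nz) (simp add: norm_power power_less_one_iff)
  ultimately show ?thesis by (simp add: field_simps)
qed


lemma ep_neg: "ep x (- s) = 1 / ep x s"
proof -
  have "ep x (- s) * ep x s = 1" unfolding ep_mult_s by simp
  then show ?thesis by (simp add: field_simps)
qed

lemma ep_sum3: "ep x (a + b + c) = ep x a * ep x b * ep x c"
  by (simp add: ep_mult_s)

lemma SS_summable:
  fixes x w :: complex
  assumes x: "norm x < 1" and w: "w \<noteq> 0"
  shows "summable (\<lambda>j. x ^ (j*j) * w ^ j)" and "summable (\<lambda>j. x ^ (Suc j * Suc j) / w ^ Suc j)"
proof -
  show "summable (\<lambda>j. x ^ (j*j) * w ^ j)"
    by (rule summable_norm_cancel, rule summable_comparison_test[OF _ summable_gauss[OF x(1), of "norm w"]])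
       (auto simp: norm_mult norm_power)
  have sb0: "summable (\<lambda>j. norm x ^ (Suc j * Suc j) / norm w ^ Suc j)"
  proof -
    have "summable (\<lambda>j. norm x ^ (j*j) * (1 / norm w) ^ j)" using summable_gauss[OF x(1), of "1 / norm w"] by simp
    then have "summable (\<lambda>j. norm x ^ (Suc j * Suc j) * (1 / norm w) ^ Suc j)"
      by (subst summable_Suc_iff)
    moreover have "(\<lambda>j. norm x ^ (Suc j * Suc j) * (1 / norm w) ^ Suc j) = (\<lambda>j. norm x ^ (Suc j * Suc j) / norm w ^ Suc j)"
      by (rule ext) (simp only: power_one_over times_divide_eq_right mult_1_right)
    ultimately show ?thesis by (simp only:)
  qed
  have "norm (x ^ (Suc j * Suc j) / w ^ Suc j) = norm x ^ (Suc j * Suc j) / norm w ^ Suc j" for j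
    by (simp only: norm_divide norm_power)
  then have "summable (\<lambda>j. norm (x ^ (Suc j * Suc j) / w ^ Suc j))" using sb0 by simp
  then show "summable (\<lambda>j. x ^ (Suc j * Suc j) / w ^ Suc j)" by (rule summable_norm_cancel)
qed

lemma gt0_pos: "gt \<zeta> \<tau> 0 (int j) = ep \<tau> (1/2) ^ (j*j) * ep \<zeta> 1 ^ j"
proof -
  have a: "ep \<tau> ((of_int (int j) + of_real 0)^2/2) = ep \<tau> (of_nat (j*j) * (1/2))"
    by (rule ep_cong) (simp add: power2_eq_square)
  have b: "ep \<zeta> (of_int (int j) + of_real 0) = ep \<zeta> (of_nat j * 1)" by (rule ep_cong) simp
  show ?thesis unfolding gt_def a b ep_nat_mult ..
qed

lemma gt0_neg: "gt \<zeta> \<tau> 0 (- int (Suc j)) = ep \<tau> (1/2) ^ (Suc j * Suc j) / ep \<zeta> 1 ^ Suc j"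
proof -
  have e: "((of_int (- int (Suc j)) + of_real 0)^2/2 :: complex) = of_nat (Suc j * Suc j) * (1/2)"
    by (simp add: power2_eq_square algebra_simps)
  have a: "ep \<tau> ((of_int (- int (Suc j)) + of_real 0)^2/2) = ep \<tau> (of_nat (Suc j * Suc j) * (1/2))"
    unfolding e ..
  have b: "ep \<zeta> (of_int (- int (Suc j)) + of_real 0) = 1 / ep \<zeta> (of_nat (Suc j) * 1)"
    by (subst ep_neg[symmetric]) (rule ep_cong, simp)
  show ?thesis unfolding gt_def a b ep_nat_mult by simp
qed

lemma gth_pos: "gt 0 \<tau> (1/2) (int j) = ep \<tau> (1/8) * (ep \<tau> (1/2) ^ (j*j) * ep \<tau> (1/2) ^ j)"
proof -
  have e: "((of_int (int j) + of_real (1/2))^2/2 :: complex) = 1/8 + of_nat (j*j) * (1/2) + of_nat j * (1/2)"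
    by (simp add: power2_eq_square field_simps)
  show ?thesis unfolding gt_def e ep_sum3 ep_nat_mult by simp
qed

lemma gth_neg: "gt 0 \<tau> (1/2) (- int (Suc j)) = ep \<tau> (1/8) * (ep \<tau> (1/2) ^ (Suc j * Suc j) / ep \<tau> (1/2) ^ Suc j)"
proof -
  have e: "((of_int (- int (Suc j)) + of_real (1/2))^2/2 :: complex) = 1/8 + of_nat (Suc j * Suc j) * (1/2) + - (of_nat (Suc j) * (1/2))"
    by (simp add: power2_eq_square field_simps)
  show ?thesis unfolding gt_def e ep_sum3 ep_neg ep_nat_mult by simp
qed

lemma G0_SS:
  assumes "Im \<tau> > 0"
  shows "G \<zeta> \<tau> 0 = SS (ep \<tau> (1/2)) (ep \<zeta> 1)"
  unfolding G_def SS_def int_split[OF gt_summable[OF assms]] gt0_pos gt0_neg ..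

lemma norm_ep_half: "Im \<tau> > 0 \<Longrightarrow> norm (ep \<tau> (1/2)) < 1"
  unfolding norm_ep by simp

lemma Gh_SS:
  assumes t: "Im \<tau> > 0"
  shows "G 0 \<tau> (1/2) = ep \<tau> (1/8) * SS (ep \<tau> (1/2)) (ep \<tau> (1/2))"
proof -
  note S = SS_summable[OF norm_ep_half[OF t] ep_nonzero[of \<tau> "1/2"]]
  show ?thesis
    unfolding G_def SS_def int_split[OF gt_summable[OF t]] gth_pos gth_neg
      suminf_mult[OF S(1)] suminf_mult[OF S(2)] by (simp add: distrib_left)
qed


definition Od :: "complex \<Rightarrow> nat \<Rightarrow> complex" where "Od q n = (\<Prod>m<n. 1 - q ^ (2*m+1))"
definition Ev :: "complex \<Rightarrow> nat \<Rightarrow> complex" where "Ev q n = (\<Prod>m<n. 1 + q ^ Suc m)"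

lemma F1: "pp q (n+n) = pp (q^2) n * Od q n"
proof (induction n)
  case (Suc n)
  have "pp q (Suc n + Suc n) = pp q (n+n) * (1 - q ^ (2*n+1)) * (1 - q ^ (2*n+2))"
    by (simp add: pp_Suc mult_2)
  also have "\<dots> = pp (q^2) (Suc n) * Od q (Suc n)"
  proof -
    have e: "(q^2) ^ Suc n = q ^ (2*n+2)"
      by (simp only: power_mult[symmetric]) (simp add: algebra_simps)
    show ?thesis unfolding Suc pp_Suc Od_def prod.lessThan_Suc e by (simp only: mult_ac)
  qed
  finally show ?case .
qed (simp add: Od_def)

lemma F2: "pp (q^2) n = Ev q n * pp q n"
proof (induction n)
  case (Suc n)
  have "(1 - (q^2) ^ Suc n) = (1 + q ^ Suc n) * (1 - q ^ Suc n)"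
    by (simp add: power_mult[symmetric] algebra_simps power2_eq_square power_add[symmetric] mult_2)
  then show ?case unfolding pp_Suc Suc Ev_def by (simp add: mult_ac)
qed (simp add: Ev_def)

lemma F3: "Pn q (-1) n = Od q n ^ 2"
  unfolding Pn_def Od_def by (simp add: power2_eq_square prod.distrib[symmetric])

lemma F4: "Pn X 1 n * Pn X (-1) n = Od (X^2) n ^ 2"
proof -
  have a: "Pn X 1 n = (\<Prod>m<n. (1 + X ^ (2*m+1)) ^ 2)"
    unfolding Pn_def by (simp add: power2_eq_square)
  have b: "Pn X (-1) n = (\<Prod>m<n. (1 - X ^ (2*m+1)) ^ 2)"
    unfolding Pn_def by (simp add: power2_eq_square)
  have c: "(1 + X ^ (2*m+1)) ^ 2 * (1 - X ^ (2*m+1)) ^ 2 = (1 - (X^2) ^ (2*m+1)) ^ 2" for m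
  proof -
    have "(X^2) ^ (2*m+1) = X ^ (2*m+1) * X ^ (2*m+1)"
      by (simp add: power_mult[symmetric] power_add[symmetric] mult_2 mult_ac)
    then show ?thesis by (simp add: power2_eq_square algebra_simps)
  qed
  show ?thesis unfolding a b Od_def prod.distrib[symmetric] c by (simp add: power2_eq_square prod.distrib[symmetric])
qed

lemma F5:
  assumes X0: "X \<noteq> 0"
  shows "Pn X X n * (1 + (X^2) ^ n) = 2 * Ev (X^2) n ^ 2"
proof (induction n)
  case 0 then show ?case by (simp add: Pn_def Ev_def)
next
  case (Suc n)
  have f1: "1 + X ^ (2*n+1) * X = 1 + (X^2) ^ Suc n"
    by (simp add: power_mult[symmetric] power_add[symmetric] mult_2 power_Suc2[symmetric])
  have f2: "1 + X ^ (2*n+1) / X = 1 + (X^2) ^ n"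
    using X0 by (simp add: power_mult[symmetric])
  have "Pn X X (Suc n) * (1 + (X^2) ^ Suc n) = (Pn X X n * (1 + (X^2) ^ n)) * (1 + (X^2) ^ Suc n) ^ 2"
    unfolding Pn_def prod.lessThan_Suc f1 f2 by (simp add: power2_eq_square mult_ac)
  also have "\<dots> = 2 * Ev (X^2) (Suc n) ^ 2"
    unfolding Suc Ev_def by (simp add: power2_eq_square mult_ac)
  finally show ?case .
qed


lemma ep_half_one: "ep (1/2) 1 = -1"
  using ep_one_half ep_swap[of "1/2" 1] by simp

lemma basic_q:
  assumes t: "Im \<tau> > 0"
  shows "norm (ep \<tau> 1) < 1" "norm (ep \<tau> (1/2)) < 1" "ep \<tau> (1/2) ^ 2 = ep \<tau> 1"
    "norm ((ep \<tau> 1)^2) < 1"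
proof -
  show q: "norm (ep \<tau> 1) < 1" unfolding norm_ep using t by simp
  show "norm (ep \<tau> (1/2)) < 1" unfolding norm_ep using t by simp
  show "ep \<tau> (1/2) ^ 2 = ep \<tau> 1" unfolding power2_eq_square ep_mult_s by simp
  show "norm ((ep \<tau> 1)^2) < 1" using q by (simp add: norm_power power_less_one_iff)
qed

lemma Od_eq:
  assumes "norm (q^2) < 1"
  shows "Od q n = pp q (n+n) / pp (q^2) n"
  using F1[of q n] pp_nz[OF assms, of n] by (simp add: field_simps)

lemma EvOd_eq:
  assumes "norm q < 1"
  shows "Ev q n * Od q n = pp q (n+n) / pp q n"
  using F1[of q n] F2[of q n] pp_nz[OF assms, of n] by (simp add: field_simps)

lemma lim_double:
  assumes "norm (q::complex) < 1"
  shows "(\<lambda>n. pp q (n+n)) \<longlonglongrightarrow> PP q"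
  by (rule pp_lim_comp[OF assms]) (rule filterlim_subseq, auto simp: strict_mono_def)

lemma theta4_2tau:
  assumes t: "Im \<tau> > 0"
  shows "theta4 0 (2*\<tau>) = PP (ep \<tau> 1) ^ 2 / PP ((ep \<tau> 1)^2)"
proof -
  define q where "q = ep \<tau> 1"
  note B = basic_q[OF t, folded q_def]
  have t2: "Im (2*\<tau>) > 0" using t by simp
  have "theta4 0 (2*\<tau>) = SS q (-1)"
    unfolding theta4_G G0_SS[OF t2] q_def
    by (simp add: ep_half_one ep_cong[of "1/2" "2*\<tau>" 1 \<tau>])
  also have "\<dots> = PP (q^2) * (PP q / PP (q^2)) ^ 2"
  proof (rule SS_jtp)
    show "norm q < 1" by (rule B(1))
    show "q \<noteq> 0" unfolding q_def by simp
    have "(\<lambda>n. (pp q (n+n) / pp (q^2) n) ^ 2) \<longlonglongrightarrow> (PP q / PP (q^2)) ^ 2"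
      by (intro tendsto_intros lim_double B(1) pp_tendsto B(4) PP_nz)
    then show "Pn q (-1) \<longlonglongrightarrow> (PP q / PP (q^2)) ^ 2"
      unfolding F3 Od_eq[OF B(4)] .
  qed simp
  also have "\<dots> = PP q ^ 2 / PP (q^2)" using PP_nz[OF B(4)] by (simp add: power2_eq_square)
  finally show ?thesis unfolding q_def .
qed

lemma triple_SS:
  assumes t: "Im \<tau> > 0"
  shows "SS (ep \<tau> (1/2)) (ep \<tau> (1/2)) * SS (ep \<tau> (1/2)) 1 * SS (ep \<tau> (1/2)) (-1) = 2 * PP (ep \<tau> 1) ^ 3"
proof -
  define q where "q = ep \<tau> 1"
  define X where "X = ep \<tau> (1/2)"
  note B = basic_q[OF t, folded q_def X_def]
  have X0: "X \<noteq> 0" unfolding X_def by simp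
  have PP0: "PP q \<noteq> 0" using PP_nz[OF B(1)] .
  have l: "Pn X w \<longlonglongrightarrow> SS X w / PP q" if "w \<noteq> 0" for w
    using jtp_lim[OF B(2) X0 that] unfolding SS_def B(3) .
  have L1: "(\<lambda>n. Pn X X n * Pn X 1 n * Pn X (-1) n) \<longlonglongrightarrow> (SS X X / PP q) * (SS X 1 / PP q) * (SS X (-1) / PP q)"
    using X0 by (intro tendsto_mult l) simp_all
  have eq: "Pn X X n * Pn X 1 n * Pn X (-1) n = 2 * (pp q (n+n) / pp q n) ^ 2 / (1 + q ^ n)" for n
  proof -
    have n1: "1 + q ^ n \<noteq> 0"
    proof (cases n)
      case 0 then show ?thesis by simp
    next
      case (Suc m)
      have "norm (q ^ n) < 1" unfolding Suc norm_power using B(1) by (subst power_less_one_iff) auto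
      then show ?thesis by (metis add_eq_0_iff norm_minus_cancel norm_one less_irrefl)
    qed
    have "Pn X X n * Pn X 1 n * Pn X (-1) n = Pn X X n * (Pn X 1 n * Pn X (-1) n)" by (simp add: mult_ac)
    also have "\<dots> = 2 * Ev q n ^ 2 / (1 + q ^ n) * Od q n ^ 2"
    proof -
      have PX: "Pn X X n = 2 * Ev q n ^ 2 / (1 + q ^ n)"
        using F5[OF X0, of n] n1 unfolding B(3) by (simp add: field_simps)
      show ?thesis unfolding F4 B(3) PX ..
    qed
    also have "\<dots> = 2 * (Ev q n * Od q n) ^ 2 / (1 + q ^ n)" by (simp add: power_mult_distrib)
    finally show ?thesis unfolding EvOd_eq[OF B(1)] .
  qed
  have L2: "(\<lambda>n. 2 * (pp q (n+n) / pp q n) ^ 2 / (1 + q ^ n)) \<longlonglongrightarrow> 2 * (PP q / PP q) ^ 2 / (1 + 0)"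
    using PP0 by (intro tendsto_intros lim_double B(1) pp_tendsto LIMSEQ_power_zero) simp_all
  have "(SS X X / PP q) * (SS X 1 / PP q) * (SS X (-1) / PP q) = 2 * (PP q / PP q) ^ 2 / (1 + 0)"
    using LIMSEQ_unique[OF L1] L2 unfolding eq by blast
  then have "SS X X * SS X 1 * SS X (-1) = 2 * PP q ^ 3" using PP0 by (simp add: field_simps power3_eq_cube)
  then show ?thesis unfolding X_def q_def .
qed


lemma eta_PP: "eta \<tau> = ep \<tau> (1/24) * PP (ep \<tau> 1)"
proof -
  have "ep \<tau> (of_nat (Suc n)) = ep \<tau> 1 ^ Suc n" for n
    using ep_nat_mult[of \<tau> "Suc n" 1] by simp
  then show ?thesis unfolding eta_def PP_def by simp
qed

lemma ep_2tau: "ep (2*\<tau>) s = ep \<tau> s ^ 2"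
proof -
  have "ep (2*\<tau>) s = ep \<tau> (of_nat 2 * s)" by (rule ep_cong) simp
  then show ?thesis unfolding ep_nat_mult .
qed

lemma eta_nz: "Im \<tau> > 0 \<Longrightarrow> eta \<tau> \<noteq> 0"
  unfolding eta_PP using PP_nz basic_q(1) by simp

lemma H1:
  assumes t: "Im \<tau> > 0"
  shows "eta (2*\<tau>) / eta \<tau> ^ 2 * theta4 0 (2*\<tau>) = 1"
proof -
  note B = basic_q[OF t]
  have "eta (2*\<tau>) = ep \<tau> (1/24) ^ 2 * PP (ep \<tau> 1 ^ 2)"
    unfolding eta_PP ep_2tau ..
  then show ?thesis unfolding theta4_2tau[OF t] eta_PP using PP_nz[OF B(1)] PP_nz[OF B(4)]
    by (simp add: field_simps)
qed

lemma H2: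
  assumes t: "Im \<tau> > 0"
  shows "2 * eta \<tau> ^ 3 = theta2 0 \<tau> * theta3 0 \<tau> * theta4 0 \<tau>"
proof -
  have e8: "ep \<tau> (1/24) ^ 3 = ep \<tau> (1/8)"
  proof -
    have "ep \<tau> (1/8) = ep \<tau> (of_nat 3 * (1/24))" by (rule ep_cong) simp
    then show ?thesis unfolding ep_nat_mult by simp
  qed
  have "theta2 0 \<tau> * theta3 0 \<tau> * theta4 0 \<tau>
      = ep \<tau> (1/8) * (SS (ep \<tau> (1/2)) (ep \<tau> (1/2)) * SS (ep \<tau> (1/2)) 1 * SS (ep \<tau> (1/2)) (-1))"
    unfolding theta2_G theta3_G theta4_G Gh_SS[OF t] G0_SS[OF t] by (simp add: ep_half_one mult_ac)
  also have "\<dots> = 2 * eta \<tau> ^ 3"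
    unfolding triple_SS[OF t] eta_PP power_mult_distrib e8 by simp
  finally show ?thesis ..
qed

theorem proposition96:
  fixes S3 S4 :: "complex \<Rightarrow> complex" and \<tau> z :: complex
  assumes "normalized_sqrt (\<lambda>t. theta3 0 t / eta t) S3"
    and "normalized_sqrt (\<lambda>t. theta4 0 t / eta t) S4"
    and "Im \<tau> > 0"
  shows "let
      A = (S3 \<tau> * theta3 z (2*\<tau>) + S4 \<tau> * theta4 z (2*\<tau>)) / (2 * eta \<tau>);
      C = (S3 \<tau> * theta3 z (2*\<tau>) - S4 \<tau> * theta4 z (2*\<tau>)) / (2 * eta \<tau>);
      B = (S3 \<tau> * theta2 z (2*\<tau>) + \<i> * S4 \<tau> * theta1 z (2*\<tau>)) / (2 * eta \<tau>);
      D = (S3 \<tau> * theta2 z (2*\<tau>) - \<i> * S4 \<tau> * theta1 z (2*\<tau>)) / (2 * eta \<tau>);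
      E = eta (2*\<tau>) / eta \<tau> ^ 2 * ep \<tau> (1/16) * ep z (-1/4) * theta3 (z - \<tau>/2) (2*\<tau>);
      F = eta (2*\<tau>) / eta \<tau> ^ 2 * ep \<tau> (1/16) * ep z (1/4) * theta3 (z + \<tau>/2) (2*\<tau>);
      NS1 = A^4 + B^4 + C^4 + D^4;
      NS2 = E^4 + F^4;
      NS3 = A^2*B^2 + B^2*C^2 + C^2*D^2 + D^2*A^2;
      NS4 = A*B*F^2 + B*C*E^2 + C*D*F^2 + A*D*E^2
    in -2*NS1 + 2*NS2 + 6*NS3 + 12*NS4
       = -24 * theta1 z \<tau> ^ 2 / theta3 0 \<tau> ^ 2
         + 2 * (theta2 0 \<tau> ^ 4 - theta4 0 \<tau> ^ 4) * theta3 z \<tau> ^ 2 / eta \<tau> ^ 6"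
  proof -
  have sq3: "S3 \<tau> ^ 2 = theta3 0 \<tau> / eta \<tau>"
    using assms(1,3) unfolding normalized_sqrt_def by blast
  have sq4: "S4 \<tau> ^ 2 = theta4 0 \<tau> / eta \<tau>"
    using assms(2,3) unfolding normalized_sqrt_def by blast
  show ?thesis
    by (rule main_reduced[where Sa = S3 and Sb = S4 and \<tau> = \<tau> and z = z, OF assms(3) sq3 sq4 eta_nz[OF assms(3)] H1[OF assms(3)] H2[OF assms(3)]])
qed

end
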